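(* Let $p$ be an odd prime. The functor $U$ from $\mathbb{Z}_{(p)}$-modules to discrete $A$-modules, $UL=\mathrm{Hom}^{\mathrm{cts}}_{\mathbb{Z}_{(p)}}(A,L)$, is exact and preserves direct sums and direct limits.
   Context: $A$ is the ring of degree zero stable operations in $p$-local complex $K$-theory. Fix $q$ primitive mod $p^2$, $\Psi^q\in A$ the Adams operation, $q_i=q^{(-1)^i\lfloor i/2\rfloor}$, $\Theta_n(X)=\prod_{i=1}^n(X-q_i)$, $\Phi_n=\Theta_n(\Psi^q)$; every element of $A$ is uniquely a convergent sum $\sum_{n\ge0}a_n\Phi_n$ with $a_n\in\mathbb{Z}_{(p)}$, and $A_m=\{\sum_{n\ge m}a_n\Phi_n\}$. An $A$-module $M$ is discrete if each $x\in M$ satisfies $A_nx=0$ for some $n$. $\mathrm{Hom}^{\mathrm{cts}}_{\mathbb{Z}_{(p)}}(A,L)$ is the set of $\mathbb{Z}_{(p)}$-homomorphisms $A\to L$ whose kernel contains some $A_n$, an $A$-module via $(af)(t)=f(ta)$. *)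

theory Defs
  imports "HOL-Algebra.Module" "HOL-Computational_Algebra.Polynomial"
          "HOL-Number_Theory.Residue_Primitive_Roots"
begin

definition Zp_set :: "nat \<Rightarrow> rat set" where
  "Zp_set p = {r. \<not> int p dvd snd (quotient_of r)}"

definition Zp_ring :: "nat \<Rightarrow> rat ring" where
  "Zp_ring p = \<lparr>carrier = Zp_set p, mult = (*), one = 1, zero = 0, add = (+)\<rparr>"

section \<open>The ring A of degree zero stable operations\<close>

text \<open>The numbers q_i = q^((-1)^i * floor(i/2)) (as rationals), the polynomials
  Theta_n(X) = prod_{i=1..n} (X - q_i), and the expansion coefficients of a polynomial
  in the basis Theta_0, Theta_1, ... (Newton expansion with nodes q_1, q_2, ...).\<close>

definition qi :: "int \<Rightarrow> nat \<Rightarrow> rat" where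
  "qi q i = of_int q powi ((-1) ^ i * int (i div 2))"

definition Theta :: "int \<Rightarrow> nat \<Rightarrow> rat poly" where
  "Theta q n = (\<Prod>i\<in>{1..n}. [:- qi q i, 1:])"

fun newton_rem :: "int \<Rightarrow> rat poly \<Rightarrow> nat \<Rightarrow> rat poly" where
  "newton_rem q P 0 = P"
| "newton_rem q P (Suc k) = newton_rem q P k div [:- qi q (Suc k), 1:]"

definition theta_coeff :: "int \<Rightarrow> rat poly \<Rightarrow> nat \<Rightarrow> rat" where
  "theta_coeff q P k = poly (newton_rem q P k) (qi q (Suc k))"

text \<open>An element sum_n a_n Phi_n of A is represented by its coefficient sequence a.
  The product is the continuous extension of Phi_m Phi_n = (Theta_m Theta_n)(Psi^q);
  only Phi_k with max m n <= k <= m + n occur in it.\<close>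
definition A_mult :: "int \<Rightarrow> (nat \<Rightarrow> rat) \<Rightarrow> (nat \<Rightarrow> rat) \<Rightarrow> (nat \<Rightarrow> rat)" where
  "A_mult q a b = (\<lambda>k. \<Sum>m\<le>k. \<Sum>n\<le>k. a m * b n * theta_coeff q (Theta q m * Theta q n) k)"

definition A_ring :: "nat \<Rightarrow> int \<Rightarrow> (nat \<Rightarrow> rat) ring" where
  "A_ring p q = \<lparr>carrier = {a. \<forall>n. a n \<in> Zp_set p}, mult = A_mult q,
     one = (\<lambda>n. if n = 0 then 1 else 0), zero = (\<lambda>n. 0), add = (\<lambda>a b n. a n + b n)\<rparr>"

definition A_filt :: "nat \<Rightarrow> int \<Rightarrow> nat \<Rightarrow> (nat \<Rightarrow> rat) set" where
  "A_filt p q m = {a \<in> carrier (A_ring p q). \<forall>n<m. a n = 0}"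

definition A_scal :: "rat \<Rightarrow> (nat \<Rightarrow> rat) \<Rightarrow> (nat \<Rightarrow> rat)" where
  "A_scal r a = (\<lambda>n. r * a n)"

definition mod_hom :: "('r, 'c) ring_scheme \<Rightarrow> ('r, 'a, 'd) module_scheme \<Rightarrow> ('r, 'b, 'e) module_scheme
     \<Rightarrow> ('a \<Rightarrow> 'b) set" where
  "mod_hom R M N = {f. f \<in> carrier M \<rightarrow> carrier N
     \<and> (\<forall>x\<in>carrier M. \<forall>y\<in>carrier M. f (x \<oplus>\<^bsub>M\<^esub> y) = f x \<oplus>\<^bsub>N\<^esub> f y)
     \<and> (\<forall>r\<in>carrier R. \<forall>x\<in>carrier M. f (r \<odot>\<^bsub>M\<^esub> x) = r \<odot>\<^bsub>N\<^esub> f x)}"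

text \<open>Hom^cts_{Z_(p)}(A, L): Z_(p)-linear maps A -> L whose kernel contains some A_n
  (represented as functions extensional on the carrier of A).\<close>
definition U_carrier :: "nat \<Rightarrow> int \<Rightarrow> (rat, 'a) module \<Rightarrow> ((nat \<Rightarrow> rat) \<Rightarrow> 'a) set" where
  "U_carrier p q L = {f \<in> extensional (carrier (A_ring p q)).
       f \<in> carrier (A_ring p q) \<rightarrow> carrier L
     \<and> (\<forall>a\<in>carrier (A_ring p q). \<forall>b\<in>carrier (A_ring p q).
          f (a \<oplus>\<^bsub>A_ring p q\<^esub> b) = f a \<oplus>\<^bsub>L\<^esub> f b)
     \<and> (\<forall>r\<in>Zp_set p. \<forall>a\<in>carrier (A_ring p q). f (A_scal r a) = r \<odot>\<^bsub>L\<^esub> f a)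
     \<and> (\<exists>n. \<forall>a\<in>A_filt p q n. f a = \<zero>\<^bsub>L\<^esub>)}"

text \<open>U L as an A-module, with (a f)(t) = f(t a).  (The ring-multiplication fields of the
  module record are irrelevant and left undefined.)\<close>
definition U :: "nat \<Rightarrow> int \<Rightarrow> (rat, 'a) module \<Rightarrow> (nat \<Rightarrow> rat, (nat \<Rightarrow> rat) \<Rightarrow> 'a) module" where
  "U p q L = \<lparr>carrier = U_carrier p q L, mult = (\<lambda>_ _. undefined), one = undefined,
     zero = (\<lambda>t\<in>carrier (A_ring p q). \<zero>\<^bsub>L\<^esub>),
     add = (\<lambda>f g. \<lambda>t\<in>carrier (A_ring p q). f t \<oplus>\<^bsub>L\<^esub> g t),
     smult = (\<lambda>a f. \<lambda>t\<in>carrier (A_ring p q). f (t \<otimes>\<^bsub>A_ring p q\<^esub> a))\<rparr>"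

definition Umap :: "nat \<Rightarrow> int \<Rightarrow> ('a \<Rightarrow> 'b) \<Rightarrow> ((nat \<Rightarrow> rat) \<Rightarrow> 'a) \<Rightarrow> ((nat \<Rightarrow> rat) \<Rightarrow> 'b)" where
  "Umap p q f = (\<lambda>\<phi>. \<lambda>t\<in>carrier (A_ring p q). f (\<phi> t))"

definition dsum :: "'i set \<Rightarrow> ('i \<Rightarrow> ('r, 'a) module) \<Rightarrow> ('r, 'i \<Rightarrow> 'a) module" where
  "dsum I L = \<lparr>carrier = {x \<in> Pi\<^sub>E I (\<lambda>i. carrier (L i)). finite {i\<in>I. x i \<noteq> \<zero>\<^bsub>L i\<^esub>}},
     mult = (\<lambda>_ _. undefined), one = undefined,
     zero = (\<lambda>i\<in>I. \<zero>\<^bsub>L i\<^esub>),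
     add = (\<lambda>x y. \<lambda>i\<in>I. x i \<oplus>\<^bsub>L i\<^esub> y i),
     smult = (\<lambda>r x. \<lambda>i\<in>I. r \<odot>\<^bsub>L i\<^esub> x i)\<rparr>"

definition dir_system :: "('r, 'c) ring_scheme \<Rightarrow> 'i set \<Rightarrow> ('i \<Rightarrow> 'i \<Rightarrow> bool)
    \<Rightarrow> ('i \<Rightarrow> ('r, 'a) module) \<Rightarrow> ('i \<Rightarrow> 'i \<Rightarrow> 'a \<Rightarrow> 'a) \<Rightarrow> bool" where
  "dir_system R I leq L \<phi> \<longleftrightarrow>
     I \<noteq> {}
   \<and> (\<forall>i\<in>I. leq i i)
   \<and> (\<forall>i\<in>I. \<forall>j\<in>I. \<forall>k\<in>I. leq i j \<longrightarrow> leq j k \<longrightarrow> leq i k)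
   \<and> (\<forall>i\<in>I. \<forall>j\<in>I. \<exists>k\<in>I. leq i k \<and> leq j k)
   \<and> (\<forall>i\<in>I. module R (L i))
   \<and> (\<forall>i\<in>I. \<forall>j\<in>I. leq i j \<longrightarrow> \<phi> i j \<in> mod_hom R (L i) (L j))
   \<and> (\<forall>i\<in>I. \<forall>x\<in>carrier (L i). \<phi> i i x = x)
   \<and> (\<forall>i\<in>I. \<forall>j\<in>I. \<forall>k\<in>I. leq i j \<longrightarrow> leq j k \<longrightarrow>
        (\<forall>x\<in>carrier (L i). \<phi> j k (\<phi> i j x) = \<phi> i k x))"

definition dl_rel :: "'i set \<Rightarrow> ('i \<Rightarrow> 'i \<Rightarrow> bool) \<Rightarrow> ('i \<Rightarrow> ('r, 'a) module)
    \<Rightarrow> ('i \<Rightarrow> 'i \<Rightarrow> 'a \<Rightarrow> 'a) \<Rightarrow> (('i \<times> 'a) \<times> ('i \<times> 'a)) set" where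
  "dl_rel I leq L \<phi> = {((i, x), (j, y)). i \<in> I \<and> j \<in> I \<and> x \<in> carrier (L i) \<and> y \<in> carrier (L j)
      \<and> (\<exists>k\<in>I. leq i k \<and> leq j k \<and> \<phi> i k x = \<phi> j k y)}"

definition dl_in :: "'i set \<Rightarrow> ('i \<Rightarrow> 'i \<Rightarrow> bool) \<Rightarrow> ('i \<Rightarrow> ('r, 'a) module)
    \<Rightarrow> ('i \<Rightarrow> 'i \<Rightarrow> 'a \<Rightarrow> 'a) \<Rightarrow> 'i \<Rightarrow> 'a \<Rightarrow> ('i \<times> 'a) set" where
  "dl_in I leq L \<phi> i x = dl_rel I leq L \<phi> `` {(i, x)}"

definition dirlim :: "'i set \<Rightarrow> ('i \<Rightarrow> 'i \<Rightarrow> bool) \<Rightarrow> ('i \<Rightarrow> ('r, 'a) module)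
    \<Rightarrow> ('i \<Rightarrow> 'i \<Rightarrow> 'a \<Rightarrow> 'a) \<Rightarrow> ('r, ('i \<times> 'a) set) module" where
  "dirlim I leq L \<phi> = \<lparr>carrier = (SIGMA i:I. carrier (L i)) // dl_rel I leq L \<phi>,
     mult = (\<lambda>_ _. undefined), one = undefined,
     zero = (let i = (SOME i. i \<in> I) in dl_in I leq L \<phi> i \<zero>\<^bsub>L i\<^esub>),
     add = (\<lambda>X Y. SOME Z. \<exists>i x j y k. (i, x) \<in> X \<and> (j, y) \<in> Y \<and> k \<in> I \<and> leq i k \<and> leq j k
              \<and> Z = dl_in I leq L \<phi> k (\<phi> i k x \<oplus>\<^bsub>L k\<^esub> \<phi> j k y)),
     smult = (\<lambda>r X. SOME Z. \<exists>i x. (i, x) \<in> X \<and> Z = dl_in I leq L \<phi> i (r \<odot>\<^bsub>L i\<^esub> x))\<rparr>"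

definition dl_can :: "nat \<Rightarrow> int \<Rightarrow> 'i set \<Rightarrow> ('i \<Rightarrow> 'i \<Rightarrow> bool) \<Rightarrow> ('i \<Rightarrow> (rat, 'a) module)
    \<Rightarrow> ('i \<Rightarrow> 'i \<Rightarrow> 'a \<Rightarrow> 'a) \<Rightarrow> ('i \<times> ((nat \<Rightarrow> rat) \<Rightarrow> 'a)) set \<Rightarrow> ((nat \<Rightarrow> rat) \<Rightarrow> ('i \<times> 'a) set)" where
  "dl_can p q I leq L \<phi> X = (case SOME ix. ix \<in> X of (i, f) \<Rightarrow>
      (\<lambda>t\<in>carrier (A_ring p q). dl_in I leq L \<phi> i (f t)))"

end

theory Submission
  imports Defs
begin


lemma Zp_char:
  assumes "prime p"
  shows "r \<in> Zp_set p \<longleftrightarrow> (\<exists>a b. b > 0 \<and> \<not> int p dvd b \<and> r = of_int a / of_int b)"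
proof
  assume "r \<in> Zp_set p"
  then show "\<exists>a b. b > 0 \<and> \<not> int p dvd b \<and> r = of_int a / of_int b"
    unfolding Zp_set_def
    by (metis (mono_tags, lifting) mem_Collect_eq prod.collapse quotient_of_denom_pos' quotient_of_div)
next
  assume "\<exists>a b. b > 0 \<and> \<not> int p dvd b \<and> r = of_int a / of_int b"
  then obtain a b where ab: "b > 0" "\<not> int p dvd b" "r = of_int a / of_int b" by blast
  obtain a' b' where q: "quotient_of r = (a', b')" by (cases "quotient_of r")
  have b'pos: "b' > 0" using q quotient_of_denom_pos by blast
  have cop: "coprime a' b'" using q quotient_of_coprime by blast
  have "r = of_int a' / of_int b'" using q quotient_of_div by blast
  with ab b'pos have "of_int a / of_int b = (of_int a' / of_int b' :: rat)" by simp
  hence "of_int (a * b') = (of_int (a' * b) :: rat)" using ab(1) b'pos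
    by (simp add: field_simps)
  hence e: "a * b' = a' * b" by linarith
  hence "b' dvd a' * b" by (metis dvd_triv_right)
  hence "b' dvd b" using cop by (metis coprime_commute coprime_dvd_mult_right_iff)
  hence "\<not> int p dvd b'" using ab(2) dvd_trans by blast
  then show "r \<in> Zp_set p" unfolding Zp_set_def using q by simp
qed

lemma Zp_add: assumes "prime p" "r \<in> Zp_set p" "s \<in> Zp_set p" shows "r + s \<in> Zp_set p"
proof -
  have pi: "prime (int p)" using assms(1) by simp
  obtain a b where ab: "b > 0" "\<not> int p dvd b" "r = of_int a / of_int b" using assms Zp_char by blast
  obtain c d where cd: "d > 0" "\<not> int p dvd d" "s = of_int c / of_int d" using assms Zp_char by blast
  have "r + s = of_int (a*d + c*b) / of_int (b*d)" using ab cd by (simp add: field_simps)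
  moreover have "\<not> int p dvd b*d" using ab cd pi prime_dvd_mult_iff by blast
  moreover have "b*d > 0" using ab cd by simp
  ultimately show ?thesis using Zp_char[OF assms(1)] by blast
qed

lemma Zp_mult: assumes "prime p" "r \<in> Zp_set p" "s \<in> Zp_set p" shows "r * s \<in> Zp_set p"
proof -
  have pi: "prime (int p)" using assms(1) by simp
  obtain a b where ab: "b > 0" "\<not> int p dvd b" "r = of_int a / of_int b" using assms Zp_char by blast
  obtain c d where cd: "d > 0" "\<not> int p dvd d" "s = of_int c / of_int d" using assms Zp_char by blast
  have "r * s = of_int (a*c) / of_int (b*d)" using ab cd by (simp add: field_simps)
  moreover have "\<not> int p dvd b*d" using ab cd pi prime_dvd_mult_iff by blast
  moreover have "b*d > 0" using ab cd by simp
  ultimately show ?thesis using Zp_char[OF assms(1)] by blast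
qed

lemma Zp_0: "prime p \<Longrightarrow> 0 \<in> Zp_set p"
  unfolding Zp_set_def using prime_gt_1_nat by fastforce
lemma Zp_1: "prime p \<Longrightarrow> 1 \<in> Zp_set p"
  unfolding Zp_set_def using prime_gt_1_nat by fastforce



definition evec :: "nat \<Rightarrow> nat \<Rightarrow> rat" where
  "evec m = (\<lambda>k. if k = m then 1 else 0)"

definition Alin :: "nat \<Rightarrow> int \<Rightarrow> (rat, 'a) module \<Rightarrow> ((nat \<Rightarrow> rat) \<Rightarrow> 'a) \<Rightarrow> bool" where
  "Alin p q L f \<longleftrightarrow> (\<forall>a\<in>carrier (A_ring p q). \<forall>b\<in>carrier (A_ring p q).
          f (a \<oplus>\<^bsub>A_ring p q\<^esub> b) = f a \<oplus>\<^bsub>L\<^esub> f b)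
     \<and> (\<forall>r\<in>Zp_set p. \<forall>a\<in>carrier (A_ring p q). f (A_scal r a) = r \<odot>\<^bsub>L\<^esub> f a)"

definition Avan :: "nat \<Rightarrow> int \<Rightarrow> (rat, 'a) module \<Rightarrow> ((nat \<Rightarrow> rat) \<Rightarrow> 'a) \<Rightarrow> nat \<Rightarrow> bool" where
  "Avan p q L f n \<longleftrightarrow> (\<forall>a\<in>A_filt p q n. f a = \<zero>\<^bsub>L\<^esub>)"

lemma U_carrier_iff: "f \<in> carrier (U p q L) \<longleftrightarrow> f \<in> extensional (carrier (A_ring p q))
   \<and> f \<in> carrier (A_ring p q) \<rightarrow> carrier L \<and> Alin p q L f \<and> (\<exists>n. Avan p q L f n)"
  by (simp add: U_def U_carrier_def Alin_def Avan_def)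

lemma U_zero: "\<zero>\<^bsub>U p q L\<^esub> = (\<lambda>t\<in>carrier (A_ring p q). \<zero>\<^bsub>L\<^esub>)"
  by (simp add: U_def)

lemma A_add: "a \<oplus>\<^bsub>A_ring p q\<^esub> b = (\<lambda>n. a n + b n)"
  by (simp add: A_ring_def)

lemma A_carrier: "a \<in> carrier (A_ring p q) \<longleftrightarrow> (\<forall>n. a n \<in> Zp_set p)"
  by (simp add: A_ring_def)

lemma A_add_closed: "prime p \<Longrightarrow> a \<in> carrier (A_ring p q) \<Longrightarrow> b \<in> carrier (A_ring p q)
   \<Longrightarrow> a \<oplus>\<^bsub>A_ring p q\<^esub> b \<in> carrier (A_ring p q)"
  by (simp add: A_add A_carrier Zp_add)

lemma A_scal_closed: "prime p \<Longrightarrow> r \<in> Zp_set p \<Longrightarrow> a \<in> carrier (A_ring p q)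
   \<Longrightarrow> A_scal r a \<in> carrier (A_ring p q)"
  by (simp add: A_scal_def A_carrier Zp_mult)

lemma evec_carrier: "prime p \<Longrightarrow> evec m \<in> carrier (A_ring p q)"
  by (simp add: evec_def A_carrier Zp_0 Zp_1)

lemma A_filt_mono: "m \<le> n \<Longrightarrow> A_filt p q n \<subseteq> A_filt p q m"
  by (auto simp: A_filt_def)

lemma A_filt_0: "A_filt p q 0 = carrier (A_ring p q)"
  by (auto simp: A_filt_def)

lemma Avan_mono: "Avan p q L f m \<Longrightarrow> m \<le> n \<Longrightarrow> Avan p q L f n"
  unfolding Avan_def using A_filt_mono by blast

lemma decomp:
  assumes "prime p" "a \<in> A_filt p q m"
  shows "A_scal (a m) (evec m) \<in> carrier (A_ring p q)"
    and "(\<lambda>k. if k \<le> m then 0 else a k) \<in> A_filt p q (Suc m)"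
    and "a = A_scal (a m) (evec m) \<oplus>\<^bsub>A_ring p q\<^esub> (\<lambda>k. if k \<le> m then 0 else a k)"
proof -
  have ac: "\<forall>n. a n \<in> Zp_set p" "\<forall>n<m. a n = 0" using assms(2) by (auto simp: A_filt_def A_carrier)
  show "A_scal (a m) (evec m) \<in> carrier (A_ring p q)"
    using ac assms(1) by (simp add: A_scal_def evec_def A_carrier Zp_0)
  show "(\<lambda>k. if k \<le> m then 0 else a k) \<in> A_filt p q (Suc m)"
    using ac assms(1) by (simp add: A_filt_def A_carrier Zp_0)
  show "a = A_scal (a m) (evec m) \<oplus>\<^bsub>A_ring p q\<^esub> (\<lambda>k. if k \<le> m then 0 else a k)"
    using ac by (auto simp: A_add A_scal_def evec_def fun_eq_iff)
qed

lemma U_unique_aux: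
  assumes "prime p" "Alin p q L f" "Alin p q L g" "Avan p q L f n" "Avan p q L g n"
    "\<forall>m<n. f (evec m) = g (evec m)"
  shows "\<forall>a\<in>A_filt p q (n - j). f a = g a"
proof (induction j)
  case 0
  then show ?case using assms(4,5) by (simp add: Avan_def)
next
  case (Suc j)
  show ?case
  proof (cases "n \<le> j")
    case True
    then have "n - Suc j = n - j" by simp
    then show ?thesis using Suc by simp
  next
    case False
    define m where "m = n - Suc j"
    have m: "m < n" "Suc m = n - j" using False by (auto simp: m_def)
    show ?thesis unfolding m_def[symmetric]
    proof
      fix a assume a: "a \<in> A_filt p q m"
      define t where "t = (\<lambda>k. if k \<le> m then 0 else a k)"
      have d1: "A_scal (a m) (evec m) \<in> carrier (A_ring p q)"
        and d2: "t \<in> A_filt p q (Suc m)"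
        and d3: "a = A_scal (a m) (evec m) \<oplus>\<^bsub>A_ring p q\<^esub> t"
        using decomp[OF assms(1) a] by (auto simp: t_def)
      have tc: "t \<in> carrier (A_ring p q)" using d2 by (simp add: A_filt_def)
      have am: "a m \<in> Zp_set p" using a by (simp add: A_filt_def A_carrier)
      have ev: "evec m \<in> carrier (A_ring p q)" using evec_carrier[OF assms(1)] .
      have "f a = a m \<odot>\<^bsub>L\<^esub> f (evec m) \<oplus>\<^bsub>L\<^esub> f t"
        using assms(2) d1 tc am ev d3 unfolding Alin_def by metis
      moreover have "g a = a m \<odot>\<^bsub>L\<^esub> g (evec m) \<oplus>\<^bsub>L\<^esub> g t"
        using assms(3) d1 tc am ev d3 unfolding Alin_def by metis
      moreover have "f t = g t" using Suc.IH d2 m by simp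
      ultimately show "f a = g a" using assms(6) m by simp
    qed
  qed
qed

lemma U_unique:
  assumes "prime p" "Alin p q L f" "Alin p q L g" "Avan p q L f n" "Avan p q L g n"
    "\<forall>m<n. f (evec m) = g (evec m)" "a \<in> carrier (A_ring p q)"
  shows "f a = g a"
  using U_unique_aux[OF assms(1-6), of n] assms(7) by (simp add: A_filt_0)

primrec lc :: "(rat, 'a) module \<Rightarrow> (nat \<Rightarrow> 'a) \<Rightarrow> nat \<Rightarrow> (nat \<Rightarrow> rat) \<Rightarrow> 'a" where
  "lc L x 0 a = \<zero>\<^bsub>L\<^esub>"
| "lc L x (Suc k) a = lc L x k a \<oplus>\<^bsub>L\<^esub> (a k \<odot>\<^bsub>L\<^esub> x k)"

lemma Zp_ring_simps: "carrier (Zp_ring p) = Zp_set p" "(\<oplus>\<^bsub>Zp_ring p\<^esub>) = (+)"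
  "(\<otimes>\<^bsub>Zp_ring p\<^esub>) = (*)" "\<one>\<^bsub>Zp_ring p\<^esub> = 1" "\<zero>\<^bsub>Zp_ring p\<^esub> = 0"
  by (simp_all add: Zp_ring_def)

context
  fixes p :: nat and q :: int and L :: "(rat, 'a) module" and x :: "nat \<Rightarrow> 'a" and n :: nat
  assumes pp: "prime p" and M: "module (Zp_ring p) L" and xc: "\<forall>m<n. x m \<in> carrier L"
begin

interpretation M: module "Zp_ring p" L by (rule M)

lemma lc_closed: "a \<in> carrier (A_ring p q) \<Longrightarrow> k \<le> n \<Longrightarrow> lc L x k a \<in> carrier L"
  by (induction k) (auto simp: A_carrier Zp_ring_simps xc)

lemma lc_add: "a \<in> carrier (A_ring p q) \<Longrightarrow> b \<in> carrier (A_ring p q) \<Longrightarrow> k \<le> n \<Longrightarrow>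
   lc L x k (a \<oplus>\<^bsub>A_ring p q\<^esub> b) = lc L x k a \<oplus>\<^bsub>L\<^esub> lc L x k b"
proof (induction k)
  case 0
  then show ?case by simp
next
  case (Suc k)
  have ak: "a k \<in> carrier (Zp_ring p)" "b k \<in> carrier (Zp_ring p)" "x k \<in> carrier L"
    using Suc.prems xc by (auto simp: A_carrier Zp_ring_simps)
  have d: "(a k + b k) \<odot>\<^bsub>L\<^esub> x k = a k \<odot>\<^bsub>L\<^esub> x k \<oplus>\<^bsub>L\<^esub> b k \<odot>\<^bsub>L\<^esub> x k"
    using M.smult_l_distr[OF ak] by (simp add: Zp_ring_simps)
  have c: "lc L x k a \<in> carrier L" "lc L x k b \<in> carrier L"
    using Suc.prems lc_closed by auto
  show ?case using Suc c ak by (simp add: A_add d M.a_ac)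
qed

lemma lc_scal: "a \<in> carrier (A_ring p q) \<Longrightarrow> r \<in> Zp_set p \<Longrightarrow> k \<le> n \<Longrightarrow>
   lc L x k (A_scal r a) = r \<odot>\<^bsub>L\<^esub> lc L x k a"
proof (induction k)
  case 0
  then show ?case using M.smult_r_null by (simp add: Zp_ring_simps)
next
  case (Suc k)
  have ak: "r \<in> carrier (Zp_ring p)" "a k \<in> carrier (Zp_ring p)" "x k \<in> carrier L"
    using Suc.prems xc by (auto simp: A_carrier Zp_ring_simps)
  have d: "(r * a k) \<odot>\<^bsub>L\<^esub> x k = r \<odot>\<^bsub>L\<^esub> (a k \<odot>\<^bsub>L\<^esub> x k)"
    using M.smult_assoc1[OF ak] by (simp add: Zp_ring_simps)
  have c: "lc L x k a \<in> carrier L"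
    using Suc.prems lc_closed by auto
  show ?case using Suc c ak by (simp add: A_scal_def d M.smult_r_distr)
qed

lemma lc_van: "a \<in> A_filt p q n \<Longrightarrow> k \<le> n \<Longrightarrow> lc L x k a = \<zero>\<^bsub>L\<^esub>"
proof (induction k)
  case 0
  then show ?case by simp
next
  case (Suc k)
  have "x k \<in> carrier L" using Suc.prems xc by auto
  moreover have "a k = 0" using Suc.prems by (auto simp: A_filt_def)
  ultimately show ?case using Suc M.smult_l_null by (simp add: Zp_ring_simps)
qed

lemma lc_evec: "k \<le> n \<Longrightarrow> lc L x k (evec m) = (if m < k then x m else \<zero>\<^bsub>L\<^esub>)"
proof (induction k)
  case 0
  then show ?case by simp
next
  case (Suc k)
  have xk: "x k \<in> carrier L" using Suc.prems xc by auto
  show ?case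
  proof (cases "k = m")
    case True
    then show ?thesis using Suc xk M.smult_one by (simp add: evec_def Zp_ring_simps)
  next
    case False
    have "lc L x k (evec m) \<in> carrier L" using Suc xc by auto
    then show ?thesis using Suc xk False M.smult_l_null by (auto simp: evec_def Zp_ring_simps)
  qed
qed

lemma U_exists:
  "(\<lambda>a\<in>carrier (A_ring p q). lc L x n a) \<in> carrier (U p q L)
   \<and> Avan p q L (\<lambda>a\<in>carrier (A_ring p q). lc L x n a) n
   \<and> (\<forall>m<n. (\<lambda>a\<in>carrier (A_ring p q). lc L x n a) (evec m) = x m)"
proof -
  let ?f = "\<lambda>a\<in>carrier (A_ring p q). lc L x n a"
  have "Alin p q L ?f" unfolding Alin_def
    using lc_add lc_scal A_add_closed[OF pp] A_scal_closed[OF pp] by simp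
  moreover have "Avan p q L ?f n" unfolding Avan_def using lc_van
    by (auto simp: A_filt_def)
  moreover have "?f \<in> carrier (A_ring p q) \<rightarrow> carrier L" using lc_closed by auto
  ultimately have "?f \<in> carrier (U p q L)" unfolding U_carrier_iff by blast
  then show ?thesis using \<open>Avan p q L ?f n\<close> evec_carrier[OF pp] lc_evec by auto
qed

end



lemma U_exists':
  assumes "prime p" "module (Zp_ring p) L" "\<forall>m<n. x m \<in> carrier L"
  shows "\<exists>f. f \<in> carrier (U p q L) \<and> Avan p q L f n \<and> (\<forall>m<n. f (evec m) = x m)"
  using U_exists[OF assms, of q] by blast

lemma U_D:
  assumes "f \<in> carrier (U p q L)"
  shows "f \<in> extensional (carrier (A_ring p q))" "f \<in> carrier (A_ring p q) \<rightarrow> carrier L"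
    "Alin p q L f" "\<exists>n. Avan p q L f n"
  using assms unfolding U_carrier_iff by blast+

lemma U_val: "f \<in> carrier (U p q L) \<Longrightarrow> a \<in> carrier (A_ring p q) \<Longrightarrow> f a \<in> carrier L"
  using U_D(2) by blast

lemma U_ext_eq:
  assumes "prime p" "f \<in> carrier (U p q L)" "g \<in> carrier (U p q L)"
    "Avan p q L f n" "Avan p q L g n" "\<forall>m<n. f (evec m) = g (evec m)"
  shows "f = g"
proof (rule extensionalityI)
  show "f \<in> extensional (carrier (A_ring p q))" "g \<in> extensional (carrier (A_ring p q))"
    using assms(2,3) U_carrier_iff by blast+
  fix a assume "a \<in> carrier (A_ring p q)"
  then show "f a = g a" using U_unique[OF assms(1) _ _ assms(4,5,6)] assms(2,3) U_carrier_iff by blast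
qed

lemma U_ext_eq':
  assumes "prime p" "f \<in> carrier (U p q L)" "g \<in> carrier (U p q L)"
    "\<And>m. f (evec m) = g (evec m)"
  shows "f = g"
proof -
  have "\<exists>n. Avan p q L f n" "\<exists>n. Avan p q L g n" using assms(2,3) unfolding U_carrier_iff by blast+
  then obtain n1 n2 where "Avan p q L f n1" "Avan p q L g n2" by blast
  then have "Avan p q L f (max n1 n2)" "Avan p q L g (max n1 n2)" using Avan_mono by fastforce+
  then show ?thesis using U_ext_eq[OF assms(1-3)] assms(4) by blast
qed

lemma hom_zero:
  assumes "module R M" "module R N" "f \<in> mod_hom R M N"
  shows "f \<zero>\<^bsub>M\<^esub> = \<zero>\<^bsub>N\<^esub>"
proof -
  interpret M: module R M by fact
  interpret N: module R N by fact
  have c: "f \<zero>\<^bsub>M\<^esub> \<in> carrier N" using assms(3) by (auto simp: mod_hom_def)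
  have h: "\<forall>x\<in>carrier M. \<forall>y\<in>carrier M. f (x \<oplus>\<^bsub>M\<^esub> y) = f x \<oplus>\<^bsub>N\<^esub> f y"
    using assms(3) by (simp add: mod_hom_def)
  have "f (\<zero>\<^bsub>M\<^esub> \<oplus>\<^bsub>M\<^esub> \<zero>\<^bsub>M\<^esub>) = f \<zero>\<^bsub>M\<^esub> \<oplus>\<^bsub>N\<^esub> f \<zero>\<^bsub>M\<^esub>"
    using h M.zero_closed by blast
  then have "f \<zero>\<^bsub>M\<^esub> = f \<zero>\<^bsub>M\<^esub> \<oplus>\<^bsub>N\<^esub> f \<zero>\<^bsub>M\<^esub>" by simp
  then show ?thesis using iffD1[OF N.add.l_cancel_one'[OF c c]] by simp
qed

lemma Umap_in:
  assumes pp: "prime p" and M: "module (Zp_ring p) L1" and N: "module (Zp_ring p) L2"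
    and f: "f \<in> mod_hom (Zp_ring p) L1 L2" and phi: "\<phi> \<in> carrier (U p q L1)"
    and av: "Avan p q L1 \<phi> n"
  shows "Umap p q f \<phi> \<in> carrier (U p q L2) \<and> Avan p q L2 (Umap p q f \<phi>) n"
proof -
  have ph: "\<phi> \<in> carrier (A_ring p q) \<rightarrow> carrier L1" "Alin p q L1 \<phi>"
    using phi unfolding U_carrier_iff by blast+
  have fh0: "f \<in> carrier L1 \<rightarrow> carrier L2"
    "\<forall>x\<in>carrier L1. \<forall>y\<in>carrier L1. f (x \<oplus>\<^bsub>L1\<^esub> y) = f x \<oplus>\<^bsub>L2\<^esub> f y"
    "\<forall>r\<in>carrier (Zp_ring p). \<forall>x\<in>carrier L1. f (r \<odot>\<^bsub>L1\<^esub> x) = r \<odot>\<^bsub>L2\<^esub> f x"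
    using f unfolding mod_hom_def mem_Collect_eq by blast+
  have fh: "f \<in> carrier L1 \<rightarrow> carrier L2"
    "\<forall>x\<in>carrier L1. \<forall>y\<in>carrier L1. f (x \<oplus>\<^bsub>L1\<^esub> y) = f x \<oplus>\<^bsub>L2\<^esub> f y"
    "\<forall>r\<in>Zp_set p. \<forall>x\<in>carrier L1. f (r \<odot>\<^bsub>L1\<^esub> x) = r \<odot>\<^bsub>L2\<^esub> f x"
    using fh0 unfolding Zp_ring_simps by blast+
  have "Alin p q L2 (Umap p q f \<phi>)"
    unfolding Alin_def
  proof (intro conjI ballI)
    fix a b assume ab: "a \<in> carrier (A_ring p q)" "b \<in> carrier (A_ring p q)"
    have "a \<oplus>\<^bsub>A_ring p q\<^esub> b \<in> carrier (A_ring p q)" using A_add_closed[OF pp ab] .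
    moreover have "\<phi> (a \<oplus>\<^bsub>A_ring p q\<^esub> b) = \<phi> a \<oplus>\<^bsub>L1\<^esub> \<phi> b" using ph(2) ab unfolding Alin_def by blast
    moreover have "\<phi> a \<in> carrier L1" "\<phi> b \<in> carrier L1" using ph(1) ab by auto
    ultimately show "Umap p q f \<phi> (a \<oplus>\<^bsub>A_ring p q\<^esub> b) = Umap p q f \<phi> a \<oplus>\<^bsub>L2\<^esub> Umap p q f \<phi> b"
      using fh(2) ab unfolding Umap_def by simp
  next
    fix r a assume ra: "r \<in> Zp_set p" "a \<in> carrier (A_ring p q)"
    have "A_scal r a \<in> carrier (A_ring p q)" using A_scal_closed[OF pp ra] .
    moreover have "\<phi> (A_scal r a) = r \<odot>\<^bsub>L1\<^esub> \<phi> a" using ph(2) ra unfolding Alin_def by blast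
    moreover have "\<phi> a \<in> carrier L1" using ph(1) ra by auto
    ultimately show "Umap p q f \<phi> (A_scal r a) = r \<odot>\<^bsub>L2\<^esub> Umap p q f \<phi> a"
      using fh(3) ra unfolding Umap_def by simp
  qed
  moreover have "Avan p q L2 (Umap p q f \<phi>) n"
    unfolding Avan_def
  proof
    fix a assume a: "a \<in> A_filt p q n"
    then have "a \<in> carrier (A_ring p q)" by (simp add: A_filt_def)
    moreover have "\<phi> a = \<zero>\<^bsub>L1\<^esub>" using av a unfolding Avan_def by blast
    ultimately show "Umap p q f \<phi> a = \<zero>\<^bsub>L2\<^esub>" using hom_zero[OF M N f] unfolding Umap_def by simp
  qed
  moreover have "Umap p q f \<phi> \<in> carrier (A_ring p q) \<rightarrow> carrier L2"
    using ph(1) fh(1) unfolding Umap_def by (simp add: Pi_iff)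
  moreover have "Umap p q f \<phi> \<in> extensional (carrier (A_ring p q))" by (simp add: Umap_def)
  ultimately show ?thesis unfolding U_carrier_iff by blast
qed



lemma part1:
  assumes pp: "prime p"
  shows "(\<forall>(L1 :: (rat, 'a) module) (L2 :: (rat, 'b) module) (L3 :: (rat, 'c) module) f g.
        module (Zp_ring p) L1 \<and> module (Zp_ring p) L2 \<and> module (Zp_ring p) L3
        \<and> f \<in> mod_hom (Zp_ring p) L1 L2 \<and> g \<in> mod_hom (Zp_ring p) L2 L3
        \<and> f ` carrier L1 = {y \<in> carrier L2. g y = \<zero>\<^bsub>L3\<^esub>}
        \<longrightarrow> Umap p q f ` carrier (U p q L1)
              = {\<psi> \<in> carrier (U p q L2). Umap p q g \<psi> = \<zero>\<^bsub>U p q L3\<^esub>})"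
proof (intro allI impI)
  fix L1 :: "(rat, 'a) module" and L2 :: "(rat, 'b) module" and L3 :: "(rat, 'c) module" and f g
  assume "module (Zp_ring p) L1 \<and> module (Zp_ring p) L2 \<and> module (Zp_ring p) L3
        \<and> f \<in> mod_hom (Zp_ring p) L1 L2 \<and> g \<in> mod_hom (Zp_ring p) L2 L3
        \<and> f ` carrier L1 = {y \<in> carrier L2. g y = \<zero>\<^bsub>L3\<^esub>}"
  then have M1: "module (Zp_ring p) L1" and M2: "module (Zp_ring p) L2" and M3: "module (Zp_ring p) L3"
    and f: "f \<in> mod_hom (Zp_ring p) L1 L2" and g: "g \<in> mod_hom (Zp_ring p) L2 L3"
    and ex: "f ` carrier L1 = {y \<in> carrier L2. g y = \<zero>\<^bsub>L3\<^esub>}" by auto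
  show "Umap p q f ` carrier (U p q L1)
              = {\<psi> \<in> carrier (U p q L2). Umap p q g \<psi> = \<zero>\<^bsub>U p q L3\<^esub>}"
  proof
    show "Umap p q f ` carrier (U p q L1)
              \<subseteq> {\<psi> \<in> carrier (U p q L2). Umap p q g \<psi> = \<zero>\<^bsub>U p q L3\<^esub>}"
    proof
      fix \<psi> assume "\<psi> \<in> Umap p q f ` carrier (U p q L1)"
      then obtain \<phi> where ph: "\<phi> \<in> carrier (U p q L1)" "\<psi> = Umap p q f \<phi>" by blast
      obtain n where "Avan p q L1 \<phi> n" using U_D(4)[OF ph(1)] by blast
      then have "\<psi> \<in> carrier (U p q L2)" using Umap_in[OF pp M1 M2 f ph(1)] ph(2) by blast
      moreover have "Umap p q g \<psi> = \<zero>\<^bsub>U p q L3\<^esub>"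
      proof -
        have "\<forall>t\<in>carrier (A_ring p q). g (f (\<phi> t)) = \<zero>\<^bsub>L3\<^esub>"
        proof
          fix t assume t: "t \<in> carrier (A_ring p q)"
          have "\<phi> t \<in> carrier L1" using U_val[OF ph(1) t] .
          then have "f (\<phi> t) \<in> f ` carrier L1" by blast
          then show "g (f (\<phi> t)) = \<zero>\<^bsub>L3\<^esub>" using ex by blast
        qed
        then show ?thesis unfolding U_zero Umap_def ph(2) by (auto intro!: restrict_ext)
      qed
      ultimately show "\<psi> \<in> {\<psi> \<in> carrier (U p q L2). Umap p q g \<psi> = \<zero>\<^bsub>U p q L3\<^esub>}" by blast
    qed
  next
    show "{\<psi> \<in> carrier (U p q L2). Umap p q g \<psi> = \<zero>\<^bsub>U p q L3\<^esub>} \<subseteq> Umap p q f ` carrier (U p q L1)"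
    proof
      fix \<psi> assume "\<psi> \<in> {\<psi> \<in> carrier (U p q L2). Umap p q g \<psi> = \<zero>\<^bsub>U p q L3\<^esub>}"
      then have ps: "\<psi> \<in> carrier (U p q L2)" and z: "Umap p q g \<psi> = \<zero>\<^bsub>U p q L3\<^esub>" by auto
      obtain n where av: "Avan p q L2 \<psi> n" using U_D(4)[OF ps] by blast
      have "\<forall>m. \<psi> (evec m) \<in> f ` carrier L1"
      proof
        fix m
        have "\<psi> (evec m) \<in> carrier L2" using U_val[OF ps evec_carrier[OF pp]] .
        moreover have "g (\<psi> (evec m)) = \<zero>\<^bsub>L3\<^esub>"
          using fun_cong[OF z, of "evec m"] evec_carrier[OF pp] by (simp add: U_zero Umap_def)
        ultimately show "\<psi> (evec m) \<in> f ` carrier L1" using ex by blast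
      qed
      then have "\<forall>m. \<exists>y. y \<in> carrier L1 \<and> f y = \<psi> (evec m)" by (metis imageE)
      from choice[OF this] obtain x where x: "\<forall>m. x m \<in> carrier L1 \<and> f (x m) = \<psi> (evec m)"
        by blast
      obtain \<phi> where phi: "\<phi> \<in> carrier (U p q L1)" "Avan p q L1 \<phi> n" "\<forall>m<n. \<phi> (evec m) = x m"
        using U_exists'[OF pp M1, of n x q] x by blast
      have u: "Umap p q f \<phi> \<in> carrier (U p q L2)" "Avan p q L2 (Umap p q f \<phi>) n"
        using Umap_in[OF pp M1 M2 f phi(1,2)] by auto
      have "Umap p q f \<phi> = \<psi>"
        using U_ext_eq[OF pp u(1) ps u(2) av] phi(3) x evec_carrier[OF pp]
        by (simp add: Umap_def)
      then show "\<psi> \<in> Umap p q f ` carrier (U p q L1)" using phi(1) by blast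
    qed
  qed
qed



lemma dsum_simps: "carrier (dsum I L) = {x \<in> Pi\<^sub>E I (\<lambda>i. carrier (L i)). finite {i\<in>I. x i \<noteq> \<zero>\<^bsub>L i\<^esub>}}"
  "\<zero>\<^bsub>dsum I L\<^esub> = (\<lambda>i\<in>I. \<zero>\<^bsub>L i\<^esub>)"
  "x \<oplus>\<^bsub>dsum I L\<^esub> y = (\<lambda>i\<in>I. x i \<oplus>\<^bsub>L i\<^esub> y i)"
  "r \<odot>\<^bsub>dsum I L\<^esub> x = (\<lambda>i\<in>I. r \<odot>\<^bsub>L i\<^esub> x i)"
  by (simp_all add: dsum_def)

lemma U_zero_in:
  assumes "module (Zp_ring p) L" and pp: "prime p"
  shows "\<zero>\<^bsub>U p q L\<^esub> \<in> carrier (U p q L) \<and> Avan p q L (\<zero>\<^bsub>U p q L\<^esub>) 0"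
proof -
  interpret M: module "Zp_ring p" L by fact
  let ?z = "\<lambda>t\<in>carrier (A_ring p q). \<zero>\<^bsub>L\<^esub>"
  have "Alin p q L ?z" unfolding Alin_def
  proof (intro conjI ballI)
    fix a b assume "a \<in> carrier (A_ring p q)" "b \<in> carrier (A_ring p q)"
    show "?z (a \<oplus>\<^bsub>A_ring p q\<^esub> b) = ?z a \<oplus>\<^bsub>L\<^esub> ?z b"
      using \<open>a \<in> carrier (A_ring p q)\<close> \<open>b \<in> carrier (A_ring p q)\<close>
      by (simp add: A_carrier A_add Zp_add[OF pp])
  next
    fix r a assume "r \<in> Zp_set p" "a \<in> carrier (A_ring p q)"
    moreover have "\<forall>n. r * a n \<in> Zp_set p"
      using calculation Zp_mult[OF pp] by (simp add: A_carrier)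
    ultimately show "?z (A_scal r a) = r \<odot>\<^bsub>L\<^esub> ?z a"
      using M.smult_r_null by (simp add: A_carrier A_scal_def Zp_ring_simps)
  qed
  moreover have "Avan p q L ?z 0" by (simp add: Avan_def A_filt_def)
  ultimately show ?thesis unfolding U_zero U_carrier_iff by auto
qed

lemma part2_into:
  assumes pp: "prime p" and Phi: "\<Phi> \<in> carrier (dsum I (\<lambda>i. U p q (L i)))"
  shows "(\<lambda>t\<in>carrier (A_ring p q). \<lambda>i\<in>I. \<Phi> i t) \<in> carrier (U p q (dsum I L))"
proof -
  let ?G = "\<lambda>t\<in>carrier (A_ring p q). \<lambda>i\<in>I. \<Phi> i t"
  define S where "S = {i\<in>I. \<Phi> i \<noteq> \<zero>\<^bsub>U p q (L i)\<^esub>}"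
  have PE: "\<Phi> \<in> Pi\<^sub>E I (\<lambda>i. carrier (U p q (L i)))" and fS: "finite S"
    using Phi unfolding dsum_simps S_def by auto
  have Phii: "\<And>i. i \<in> I \<Longrightarrow> \<Phi> i \<in> carrier (U p q (L i))" using PE by auto
  have zero_out: "\<And>i t. i \<in> I \<Longrightarrow> i \<notin> S \<Longrightarrow> t \<in> carrier (A_ring p q) \<Longrightarrow> \<Phi> i t = \<zero>\<^bsub>L i\<^esub>"
    unfolding S_def U_zero by auto
  have "?G \<in> carrier (A_ring p q) \<rightarrow> carrier (dsum I L)"
  proof (rule Pi_I)
    fix t assume t: "t \<in> carrier (A_ring p q)"
    have pe: "(\<lambda>i\<in>I. \<Phi> i t) \<in> Pi\<^sub>E I (\<lambda>i. carrier (L i))"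
      using U_val[OF Phii t] by auto
    have "{i\<in>I. (\<lambda>i\<in>I. \<Phi> i t) i \<noteq> \<zero>\<^bsub>L i\<^esub>} \<subseteq> S"
      using zero_out t by auto
    then have "finite {i\<in>I. (\<lambda>i\<in>I. \<Phi> i t) i \<noteq> \<zero>\<^bsub>L i\<^esub>}" using fS finite_subset by blast
    then have "(\<lambda>i\<in>I. \<Phi> i t) \<in> carrier (dsum I L)" unfolding dsum_simps using pe by blast
    moreover have "?G t = (\<lambda>i\<in>I. \<Phi> i t)" using t by simp
    ultimately show "?G t \<in> carrier (dsum I L)" by simp
  qed
  moreover have "Alin p q (dsum I L) ?G" unfolding Alin_def
  proof (intro conjI ballI)
    fix a b assume ab: "a \<in> carrier (A_ring p q)" "b \<in> carrier (A_ring p q)"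
    have "\<And>i. i \<in> I \<Longrightarrow> \<Phi> i (a \<oplus>\<^bsub>A_ring p q\<^esub> b) = \<Phi> i a \<oplus>\<^bsub>L i\<^esub> \<Phi> i b"
      using U_D(3)[OF Phii] ab unfolding Alin_def by blast
    then show "?G (a \<oplus>\<^bsub>A_ring p q\<^esub> b) = ?G a \<oplus>\<^bsub>dsum I L\<^esub> ?G b"
      using ab A_add_closed[OF pp ab] unfolding dsum_simps by (auto intro!: restrict_ext)
  next
    fix r a assume ra: "r \<in> Zp_set p" "a \<in> carrier (A_ring p q)"
    have "\<And>i. i \<in> I \<Longrightarrow> \<Phi> i (A_scal r a) = r \<odot>\<^bsub>L i\<^esub> \<Phi> i a"
      using U_D(3)[OF Phii] ra unfolding Alin_def by blast
    then show "?G (A_scal r a) = r \<odot>\<^bsub>dsum I L\<^esub> ?G a"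
      using ra A_scal_closed[OF pp ra] unfolding dsum_simps by (auto intro!: restrict_ext)
  qed
  moreover have "\<exists>N. Avan p q (dsum I L) ?G N"
  proof -
    define nn where "nn i = (SOME n. Avan p q (L i) (\<Phi> i) n)" for i
    have nn: "\<And>i. i \<in> I \<Longrightarrow> Avan p q (L i) (\<Phi> i) (nn i)"
      unfolding nn_def using U_D(4)[OF Phii] by (metis someI_ex)
    define N where "N = (\<Sum>i\<in>S. nn i)"
    have "\<And>i. i \<in> S \<Longrightarrow> nn i \<le> N" unfolding N_def using fS by (simp add: member_le_sum)
    then have av: "\<And>i. i \<in> S \<Longrightarrow> Avan p q (L i) (\<Phi> i) N" using nn Avan_mono S_def by blast
    have "Avan p q (dsum I L) ?G N" unfolding Avan_def
    proof
      fix a assume a: "a \<in> A_filt p q N"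
      then have ac: "a \<in> carrier (A_ring p q)" by (simp add: A_filt_def)
      have "\<And>i. i \<in> I \<Longrightarrow> \<Phi> i a = \<zero>\<^bsub>L i\<^esub>"
        using av a zero_out ac unfolding Avan_def by blast
      then show "?G a = \<zero>\<^bsub>dsum I L\<^esub>" using ac unfolding dsum_simps by (auto intro!: restrict_ext)
    qed
    then show ?thesis by blast
  qed
  ultimately show ?thesis unfolding U_carrier_iff by simp
qed


lemma part2_inj:
  assumes pp: "prime p"
  shows "inj_on (\<lambda>\<Phi>. \<lambda>t\<in>carrier (A_ring p q). \<lambda>i\<in>I. \<Phi> i t) (carrier (dsum I (\<lambda>i. U p q (L i))))"
proof (rule inj_onI)
  fix \<Phi> \<Psi> assume Phi: "\<Phi> \<in> carrier (dsum I (\<lambda>i. U p q (L i)))"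
    and Psi: "\<Psi> \<in> carrier (dsum I (\<lambda>i. U p q (L i)))"
    and eq: "(\<lambda>t\<in>carrier (A_ring p q). \<lambda>i\<in>I. \<Phi> i t) = (\<lambda>t\<in>carrier (A_ring p q). \<lambda>i\<in>I. \<Psi> i t)"
  have PE: "\<Phi> \<in> Pi\<^sub>E I (\<lambda>i. carrier (U p q (L i)))" "\<Psi> \<in> Pi\<^sub>E I (\<lambda>i. carrier (U p q (L i)))"
    using Phi Psi unfolding dsum_simps by auto
  have ex: "\<Phi> \<in> extensional I" "\<Psi> \<in> extensional I" using PE by (auto simp: PiE_def)
  show "\<Phi> = \<Psi>"
  proof (rule extensionalityI[OF ex])
    fix i assume i: "i \<in> I"
    show "\<Phi> i = \<Psi> i"
    proof (rule extensionalityI)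
      show "\<Phi> i \<in> extensional (carrier (A_ring p q))" "\<Psi> i \<in> extensional (carrier (A_ring p q))"
        using PE i U_D(1) by blast+
      fix t assume t: "t \<in> carrier (A_ring p q)"
      show "\<Phi> i t = \<Psi> i t" using fun_cong[OF fun_cong[OF eq, of t], of i] t i by simp
    qed
  qed
qed

lemma part2_surj:
  assumes pp: "prime p" and M: "\<forall>i\<in>I. module (Zp_ring p) (L i)"
    and G: "G \<in> carrier (U p q (dsum I L))"
  shows "G \<in> (\<lambda>\<Phi>. \<lambda>t\<in>carrier (A_ring p q). \<lambda>i\<in>I. \<Phi> i t) ` carrier (dsum I (\<lambda>i. U p q (L i)))"
proof -
  define \<Phi> where "\<Phi> = (\<lambda>i\<in>I. \<lambda>t\<in>carrier (A_ring p q). G t i)"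
  obtain n where Gn: "Avan p q (dsum I L) G n" using U_D(4)[OF G] by blast
  have Gv: "\<And>t. t \<in> carrier (A_ring p q) \<Longrightarrow> G t \<in> carrier (dsum I L)" using U_val[OF G] .
  have GvE: "\<And>t. t \<in> carrier (A_ring p q) \<Longrightarrow> G t \<in> Pi\<^sub>E I (\<lambda>i. carrier (L i))"
    using Gv unfolding dsum_simps by blast
  have GL: "Alin p q (dsum I L) G" using U_D(3)[OF G] .
  have Phii: "\<Phi> i \<in> carrier (U p q (L i)) \<and> Avan p q (L i) (\<Phi> i) n" if i: "i \<in> I" for i
  proof -
    have Pi: "\<Phi> i = (\<lambda>t\<in>carrier (A_ring p q). G t i)" using i by (simp add: \<Phi>_def)
    have "\<Phi> i \<in> carrier (A_ring p q) \<rightarrow> carrier (L i)"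
      unfolding Pi using GvE i by auto
    moreover have "Alin p q (L i) (\<Phi> i)" unfolding Alin_def Pi
    proof (intro conjI ballI)
      fix a b assume ab: "a \<in> carrier (A_ring p q)" "b \<in> carrier (A_ring p q)"
      have "G (a \<oplus>\<^bsub>A_ring p q\<^esub> b) = G a \<oplus>\<^bsub>dsum I L\<^esub> G b" using GL ab unfolding Alin_def by blast
      then have "G (a \<oplus>\<^bsub>A_ring p q\<^esub> b) i = G a i \<oplus>\<^bsub>L i\<^esub> G b i" using i unfolding dsum_simps by simp
      then show "(\<lambda>t\<in>carrier (A_ring p q). G t i) (a \<oplus>\<^bsub>A_ring p q\<^esub> b) =
          (\<lambda>t\<in>carrier (A_ring p q). G t i) a \<oplus>\<^bsub>L i\<^esub> (\<lambda>t\<in>carrier (A_ring p q). G t i) b"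
        using ab A_add_closed[OF pp ab] by simp
    next
      fix r a assume ra: "r \<in> Zp_set p" "a \<in> carrier (A_ring p q)"
      have "G (A_scal r a) = r \<odot>\<^bsub>dsum I L\<^esub> G a" using GL ra unfolding Alin_def by blast
      then have "G (A_scal r a) i = r \<odot>\<^bsub>L i\<^esub> G a i" using i unfolding dsum_simps by simp
      then show "(\<lambda>t\<in>carrier (A_ring p q). G t i) (A_scal r a) = r \<odot>\<^bsub>L i\<^esub> (\<lambda>t\<in>carrier (A_ring p q). G t i) a"
        using ra A_scal_closed[OF pp ra] by simp
    qed
    moreover have "Avan p q (L i) (\<Phi> i) n" unfolding Avan_def Pi
    proof
      fix a assume a: "a \<in> A_filt p q n"
      then have "G a = \<zero>\<^bsub>dsum I L\<^esub>" using Gn unfolding Avan_def by blast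
      then have "G a i = \<zero>\<^bsub>L i\<^esub>" using i unfolding dsum_simps by simp
      then show "(\<lambda>t\<in>carrier (A_ring p q). G t i) a = \<zero>\<^bsub>L i\<^esub>" using a by (simp add: A_filt_def)
    qed
    moreover have "\<Phi> i \<in> extensional (carrier (A_ring p q))" unfolding Pi by simp
    ultimately show ?thesis unfolding U_carrier_iff by blast
  qed
  have sub: "{i\<in>I. \<Phi> i \<noteq> \<zero>\<^bsub>U p q (L i)\<^esub>} \<subseteq> (\<Union>m<n. {i\<in>I. G (evec m) i \<noteq> \<zero>\<^bsub>L i\<^esub>})"
  proof
    fix i assume "i \<in> {i\<in>I. \<Phi> i \<noteq> \<zero>\<^bsub>U p q (L i)\<^esub>}"
    then have i: "i \<in> I" and ne: "\<Phi> i \<noteq> \<zero>\<^bsub>U p q (L i)\<^esub>" by auto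
    have z: "\<zero>\<^bsub>U p q (L i)\<^esub> \<in> carrier (U p q (L i))" "Avan p q (L i) (\<zero>\<^bsub>U p q (L i)\<^esub>) n"
      using U_zero_in[OF _ pp, of "L i" q] M i Avan_mono by blast+
    show "i \<in> (\<Union>m<n. {i\<in>I. G (evec m) i \<noteq> \<zero>\<^bsub>L i\<^esub>})"
    proof (rule ccontr)
      assume "i \<notin> (\<Union>m<n. {i\<in>I. G (evec m) i \<noteq> \<zero>\<^bsub>L i\<^esub>})"
      then have "\<forall>m<n. G (evec m) i = \<zero>\<^bsub>L i\<^esub>" using i by blast
      then have "\<forall>m<n. \<Phi> i (evec m) = \<zero>\<^bsub>U p q (L i)\<^esub> (evec m)"
        using i evec_carrier[OF pp] by (simp add: \<Phi>_def U_zero)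
      then have "\<Phi> i = \<zero>\<^bsub>U p q (L i)\<^esub>"
        using U_ext_eq[OF pp _ z(1) _ z(2)] Phii[OF i] by blast
      then show False using ne by blast
    qed
  qed
  have "finite (\<Union>m<n. {i\<in>I. G (evec m) i \<noteq> \<zero>\<^bsub>L i\<^esub>})"
    using Gv[OF evec_carrier[OF pp]] unfolding dsum_simps by blast
  then have fin: "finite {i\<in>I. \<Phi> i \<noteq> \<zero>\<^bsub>U p q (L i)\<^esub>}" using sub finite_subset by blast
  have "\<Phi> \<in> Pi\<^sub>E I (\<lambda>i. carrier (U p q (L i)))" using Phii by (simp add: \<Phi>_def)
  then have Pc: "\<Phi> \<in> carrier (dsum I (\<lambda>i. U p q (L i)))" using fin unfolding dsum_simps by blast
  have "(\<lambda>t\<in>carrier (A_ring p q). \<lambda>i\<in>I. \<Phi> i t) = G"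
  proof (rule extensionalityI)
    show "G \<in> extensional (carrier (A_ring p q))" using U_D(1)[OF G] .
    show "(\<lambda>t\<in>carrier (A_ring p q). \<lambda>i\<in>I. \<Phi> i t) \<in> extensional (carrier (A_ring p q))" by simp
    fix t assume t: "t \<in> carrier (A_ring p q)"
    have "(\<lambda>i\<in>I. \<Phi> i t) = G t"
      using GvE[OF t] t by (auto simp: \<Phi>_def fun_eq_iff PiE_def extensional_def)
    then show "(\<lambda>t\<in>carrier (A_ring p q). \<lambda>i\<in>I. \<Phi> i t) t = G t" using t by simp
  qed
  then show ?thesis using Pc by blast
qed

lemma part2:
  assumes pp: "prime p"
  shows "(\<forall>(I :: 'i set) (L :: 'i \<Rightarrow> (rat, 'd) module).
        (\<forall>i\<in>I. module (Zp_ring p) (L i)) \<longrightarrow>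
        bij_betw (\<lambda>\<Phi>. \<lambda>t\<in>carrier (A_ring p q). \<lambda>i\<in>I. \<Phi> i t)
          (carrier (dsum I (\<lambda>i. U p q (L i)))) (carrier (U p q (dsum I L))))"
proof (intro allI impI)
  fix I :: "'i set" and L :: "'i \<Rightarrow> (rat, 'd) module"
  assume M: "\<forall>i\<in>I. module (Zp_ring p) (L i)"
  show "bij_betw (\<lambda>\<Phi>. \<lambda>t\<in>carrier (A_ring p q). \<lambda>i\<in>I. \<Phi> i t)
          (carrier (dsum I (\<lambda>i. U p q (L i)))) (carrier (U p q (dsum I L)))"
    unfolding bij_betw_def
  proof (intro conjI)
    show "inj_on (\<lambda>\<Phi>. \<lambda>t\<in>carrier (A_ring p q). \<lambda>i\<in>I. \<Phi> i t) (carrier (dsum I (\<lambda>i. U p q (L i))))"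
      using part2_inj[OF pp] .
    show "(\<lambda>\<Phi>. \<lambda>t\<in>carrier (A_ring p q). \<lambda>i\<in>I. \<Phi> i t) ` carrier (dsum I (\<lambda>i. U p q (L i))) = carrier (U p q (dsum I L))"
      using part2_into[OF pp] part2_surj[OF pp M] by blast
  qed
qed



locale psys =
  fixes I :: "'i set" and leq :: "'i \<Rightarrow> 'i \<Rightarrow> bool" and L :: "'i \<Rightarrow> ('r, 'a) module"
    and \<phi> :: "'i \<Rightarrow> 'i \<Rightarrow> 'a \<Rightarrow> 'a"
  assumes ne: "I \<noteq> {}"
    and rfl: "i \<in> I \<Longrightarrow> leq i i"
    and trn: "i \<in> I \<Longrightarrow> j \<in> I \<Longrightarrow> k \<in> I \<Longrightarrow> leq i j \<Longrightarrow> leq j k \<Longrightarrow> leq i k"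
    and dir: "i \<in> I \<Longrightarrow> j \<in> I \<Longrightarrow> \<exists>k\<in>I. leq i k \<and> leq j k"
    and ident: "i \<in> I \<Longrightarrow> x \<in> carrier (L i) \<Longrightarrow> \<phi> i i x = x"
    and comp: "i \<in> I \<Longrightarrow> j \<in> I \<Longrightarrow> k \<in> I \<Longrightarrow> leq i j \<Longrightarrow> leq j k \<Longrightarrow> x \<in> carrier (L i)
       \<Longrightarrow> \<phi> j k (\<phi> i j x) = \<phi> i k x"
    and into: "i \<in> I \<Longrightarrow> j \<in> I \<Longrightarrow> leq i j \<Longrightarrow> x \<in> carrier (L i) \<Longrightarrow> \<phi> i j x \<in> carrier (L j)"
begin

abbreviation "Sg \<equiv> (SIGMA i:I. carrier (L i))"
abbreviation "RR \<equiv> dl_rel I leq L \<phi>"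

lemma ub_fin: "finite F \<Longrightarrow> F \<subseteq> I \<Longrightarrow> \<exists>m\<in>I. \<forall>i\<in>F. leq i m"
proof (induction F rule: finite_induct)
  case empty
  then show ?case using ne by blast
next
  case (insert x F)
  then obtain m where m: "m \<in> I" "\<forall>i\<in>F. leq i m" by auto
  obtain k where k: "k \<in> I" "leq x k" "leq m k" using dir[OF _ m(1), of x] insert.prems by auto
  have "\<forall>i\<in>insert x F. leq i k" using m k trn insert.prems by blast
  then show ?case using k by blast
qed

lemma equiv_RR: "equiv Sg RR"
proof (rule equivI)
  show "RR \<subseteq> Sg \<times> Sg" unfolding dl_rel_def by auto
  show "refl_on Sg RR"
  proof (rule refl_onI)
    fix z assume "z \<in> Sg"
    then obtain i x where z: "z = (i, x)" "i \<in> I" "x \<in> carrier (L i)" by blast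
    then show "(z, z) \<in> RR" unfolding dl_rel_def using rfl by auto
  qed
  show "sym RR" unfolding dl_rel_def sym_def by auto
  show "trans RR"
  proof (rule transI)
    fix u v w assume uv: "(u, v) \<in> RR" and vw: "(v, w) \<in> RR"
    obtain i x j y l z where uvw: "u = (i, x)" "v = (j, y)" "w = (l, z)"
      by (metis prod.collapse)
    obtain k where k: "i \<in> I" "j \<in> I" "x \<in> carrier (L i)" "y \<in> carrier (L j)" "k \<in> I"
        "leq i k" "leq j k" "\<phi> i k x = \<phi> j k y"
      using uv unfolding uvw dl_rel_def by auto
    obtain k' where k': "l \<in> I" "z \<in> carrier (L l)" "k' \<in> I"
        "leq j k'" "leq l k'" "\<phi> j k' y = \<phi> l k' z"
      using vw unfolding uvw dl_rel_def by auto
    obtain m where m: "m \<in> I" "leq k m" "leq k' m" using dir[OF k(5) k'(3)] by blast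
    have "\<phi> i m x = \<phi> k m (\<phi> i k x)" using comp k m by metis
    also have "\<dots> = \<phi> k m (\<phi> j k y)" using k by simp
    also have "\<dots> = \<phi> j m y" using comp k m by metis
    also have "\<dots> = \<phi> k' m (\<phi> j k' y)" using comp k k' m by metis
    also have "\<dots> = \<phi> k' m (\<phi> l k' z)" using k' by simp
    also have "\<dots> = \<phi> l m z" using comp k' m by metis
    finally have "\<phi> i m x = \<phi> l m z" .
    moreover have "leq i m" "leq l m" using trn k k' m by blast+
    ultimately show "(u, w) \<in> RR" unfolding uvw dl_rel_def using k k' m by auto
  qed
qed

lemma dl_in_eq_iff:
  assumes "i \<in> I" "x \<in> carrier (L i)" "j \<in> I" "y \<in> carrier (L j)"
  shows "dl_in I leq L \<phi> i x = dl_in I leq L \<phi> j y \<longleftrightarrow> (\<exists>k\<in>I. leq i k \<and> leq j k \<and> \<phi> i k x = \<phi> j k y)"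
proof -
  have "dl_in I leq L \<phi> i x = dl_in I leq L \<phi> j y \<longleftrightarrow> ((i, x), (j, y)) \<in> RR"
    unfolding dl_in_def using eq_equiv_class_iff[OF equiv_RR] assms by blast
  then show ?thesis unfolding dl_rel_def using assms by auto
qed

lemma dl_in_quot: "i \<in> I \<Longrightarrow> x \<in> carrier (L i) \<Longrightarrow> dl_in I leq L \<phi> i x \<in> Sg // RR"
  unfolding dl_in_def by (rule quotientI) auto

lemma dl_in_self: "i \<in> I \<Longrightarrow> x \<in> carrier (L i) \<Longrightarrow> (i, x) \<in> dl_in I leq L \<phi> i x"
  unfolding dl_in_def by (rule equiv_class_self[OF equiv_RR]) auto

lemma quot_rep: "X \<in> Sg // RR \<Longrightarrow> \<exists>i x. i \<in> I \<and> x \<in> carrier (L i) \<and> X = dl_in I leq L \<phi> i x"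
  unfolding dl_in_def by (erule quotientE) auto

lemma quot_mem: assumes "X \<in> Sg // RR" "(i, x) \<in> X"
  shows "i \<in> I" "x \<in> carrier (L i)" "X = dl_in I leq L \<phi> i x"
proof -
  obtain i0 x0 where X: "i0 \<in> I" "x0 \<in> carrier (L i0)" "X = dl_in I leq L \<phi> i0 x0"
    using quot_rep[OF assms(1)] by blast
  then have r: "((i0, x0), (i, x)) \<in> RR" using assms(2) unfolding dl_in_def by simp
  then show "i \<in> I" "x \<in> carrier (L i)" unfolding dl_rel_def by auto
  show "X = dl_in I leq L \<phi> i x" unfolding X(3) dl_in_def
    using equiv_class_eq[OF equiv_RR r] .
qed

lemma dl_in_push:
  assumes "i \<in> I" "k \<in> I" "leq i k" "x \<in> carrier (L i)"
  shows "dl_in I leq L \<phi> k (\<phi> i k x) = dl_in I leq L \<phi> i x"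
proof -
  have "\<phi> k k (\<phi> i k x) = \<phi> i k x" using ident into assms by blast
  then show ?thesis using dl_in_eq_iff[OF assms(2) into[OF assms(1,2,3,4)] assms(1,4)] assms rfl by metis
qed

end


lemma ds_mod: "dir_system R I leq L \<phi> \<Longrightarrow> i \<in> I \<Longrightarrow> module R (L i)"
  unfolding dir_system_def by blast

lemma ds_hom: "dir_system R I leq L \<phi> \<Longrightarrow> i \<in> I \<Longrightarrow> j \<in> I \<Longrightarrow> leq i j \<Longrightarrow> \<phi> i j \<in> mod_hom R (L i) (L j)"
  unfolding dir_system_def by blast

lemma ds_psys: assumes "dir_system R I leq L \<phi>" shows "psys I leq L \<phi>"
proof
  show "I \<noteq> {}" using assms unfolding dir_system_def by blast
  show "\<And>i. i \<in> I \<Longrightarrow> leq i i" using assms unfolding dir_system_def by blast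
  show "\<And>i j k. i \<in> I \<Longrightarrow> j \<in> I \<Longrightarrow> k \<in> I \<Longrightarrow> leq i j \<Longrightarrow> leq j k \<Longrightarrow> leq i k"
    using assms unfolding dir_system_def by blast
  show "\<And>i j. i \<in> I \<Longrightarrow> j \<in> I \<Longrightarrow> \<exists>k\<in>I. leq i k \<and> leq j k"
    using assms unfolding dir_system_def by blast
  show "\<And>i x. i \<in> I \<Longrightarrow> x \<in> carrier (L i) \<Longrightarrow> \<phi> i i x = x"
    using assms unfolding dir_system_def by blast
  show "\<And>i j k x. i \<in> I \<Longrightarrow> j \<in> I \<Longrightarrow> k \<in> I \<Longrightarrow> leq i j \<Longrightarrow> leq j k \<Longrightarrow> x \<in> carrier (L i)
       \<Longrightarrow> \<phi> j k (\<phi> i j x) = \<phi> i k x"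
    using assms unfolding dir_system_def by blast
  show "\<And>i j x. i \<in> I \<Longrightarrow> j \<in> I \<Longrightarrow> leq i j \<Longrightarrow> x \<in> carrier (L i) \<Longrightarrow> \<phi> i j x \<in> carrier (L j)"
    using ds_hom[OF assms] unfolding mod_hom_def by blast
qed

context psys
begin

lemma agree_push:
  assumes "i \<in> I" "i' \<in> I" "k1 \<in> I" "m \<in> I" "leq i k1" "leq i' k1" "leq k1 m"
    "x \<in> carrier (L i)" "x' \<in> carrier (L i')" "\<phi> i k1 x = \<phi> i' k1 x'"
  shows "\<phi> i m x = \<phi> i' m x'"
proof -
  have e1: "\<phi> k1 m (\<phi> i k1 x) = \<phi> i m x" using comp[of i k1 m x] assms by blast
  have e2: "\<phi> k1 m (\<phi> i' k1 x') = \<phi> i' m x'" using comp[of i' k1 m x'] assms by blast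
  show ?thesis using e1 e2 assms(10) by metis
qed

context
  fixes R :: "('r, 'c) ring_scheme"
  assumes ds: "dir_system R I leq L \<phi>"
begin

lemma hom_add: "a \<in> I \<Longrightarrow> b \<in> I \<Longrightarrow> leq a b \<Longrightarrow> u \<in> carrier (L a) \<Longrightarrow> v \<in> carrier (L a)
   \<Longrightarrow> \<phi> a b (u \<oplus>\<^bsub>L a\<^esub> v) = \<phi> a b u \<oplus>\<^bsub>L b\<^esub> \<phi> a b v"
  using ds_hom[OF ds] unfolding mod_hom_def by blast

lemma hom_smult: "a \<in> I \<Longrightarrow> b \<in> I \<Longrightarrow> leq a b \<Longrightarrow> r \<in> carrier R \<Longrightarrow> u \<in> carrier (L a)
   \<Longrightarrow> \<phi> a b (r \<odot>\<^bsub>L a\<^esub> u) = r \<odot>\<^bsub>L b\<^esub> \<phi> a b u"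
  using ds_hom[OF ds] unfolding mod_hom_def by blast

lemma push_sum:
  assumes "i \<in> I" "j \<in> I" "k \<in> I" "m \<in> I" "leq i k" "leq j k" "leq k m"
    "x \<in> carrier (L i)" "y \<in> carrier (L j)"
  shows "\<phi> k m (\<phi> i k x \<oplus>\<^bsub>L k\<^esub> \<phi> j k y) = \<phi> i m x \<oplus>\<^bsub>L m\<^esub> \<phi> j m y"
proof -
  have c: "\<phi> i k x \<in> carrier (L k)" "\<phi> j k y \<in> carrier (L k)" using into assms by blast+
  have e1: "\<phi> k m (\<phi> i k x) = \<phi> i m x" using comp[of i k m x] assms by blast
  have e2: "\<phi> k m (\<phi> j k y) = \<phi> j m y" using comp[of j k m y] assms by blast
  show ?thesis using hom_add[OF assms(3,4,7) c] e1 e2 by simp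
qed

lemma sum_in: "i \<in> I \<Longrightarrow> j \<in> I \<Longrightarrow> k \<in> I \<Longrightarrow> leq i k \<Longrightarrow> leq j k \<Longrightarrow> x \<in> carrier (L i) \<Longrightarrow> y \<in> carrier (L j)
   \<Longrightarrow> \<phi> i k x \<oplus>\<^bsub>L k\<^esub> \<phi> j k y \<in> carrier (L k)"
proof -
  assume a: "i \<in> I" "j \<in> I" "k \<in> I" "leq i k" "leq j k" "x \<in> carrier (L i)" "y \<in> carrier (L j)"
  interpret M: module R "L k" using ds_mod[OF ds a(3)] .
  show ?thesis using into a by (intro M.a_closed) auto
qed

lemma dl_add:
  assumes i: "i \<in> I" and j: "j \<in> I" and k: "k \<in> I" "leq i k" "leq j k"
    and x: "x \<in> carrier (L i)" and y: "y \<in> carrier (L j)"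
  shows "dl_in I leq L \<phi> i x \<oplus>\<^bsub>dirlim I leq L \<phi>\<^esub> dl_in I leq L \<phi> j y
        = dl_in I leq L \<phi> k (\<phi> i k x \<oplus>\<^bsub>L k\<^esub> \<phi> j k y)"
proof -
  let ?X = "dl_in I leq L \<phi> i x" and ?Y = "dl_in I leq L \<phi> j y"
  let ?P = "\<lambda>Z. \<exists>i x j y k. (i, x) \<in> ?X \<and> (j, y) \<in> ?Y \<and> k \<in> I \<and> leq i k \<and> leq j k
              \<and> Z = dl_in I leq L \<phi> k (\<phi> i k x \<oplus>\<^bsub>L k\<^esub> \<phi> j k y)"
  have addeq: "?X \<oplus>\<^bsub>dirlim I leq L \<phi>\<^esub> ?Y = (SOME Z. ?P Z)" by (simp add: dirlim_def)
  have Xq: "?X \<in> Sg // RR" "?Y \<in> Sg // RR" using dl_in_quot i j x y by auto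
  show ?thesis unfolding addeq
  proof (rule someI2[where P = ?P])
    show "?P (dl_in I leq L \<phi> k (\<phi> i k x \<oplus>\<^bsub>L k\<^esub> \<phi> j k y))"
      using dl_in_self i j x y k by blast
  next
    fix Z assume "?P Z"
    then obtain i' x' j' y' k' where w: "(i', x') \<in> ?X" "(j', y') \<in> ?Y" "k' \<in> I" "leq i' k'" "leq j' k'"
      "Z = dl_in I leq L \<phi> k' (\<phi> i' k' x' \<oplus>\<^bsub>L k'\<^esub> \<phi> j' k' y')" by blast
    have i': "i' \<in> I" "x' \<in> carrier (L i')" "?X = dl_in I leq L \<phi> i' x'" using quot_mem[OF Xq(1) w(1)] by auto
    have j': "j' \<in> I" "y' \<in> carrier (L j')" "?Y = dl_in I leq L \<phi> j' y'" using quot_mem[OF Xq(2) w(2)] by auto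
    obtain k1 where k1: "k1 \<in> I" "leq i k1" "leq i' k1" "\<phi> i k1 x = \<phi> i' k1 x'"
      using dl_in_eq_iff[OF i x i'(1,2)] i'(3) by blast
    obtain k2 where k2: "k2 \<in> I" "leq j k2" "leq j' k2" "\<phi> j k2 y = \<phi> j' k2 y'"
      using dl_in_eq_iff[OF j y j'(1,2)] j'(3) by blast
    obtain m where m: "m \<in> I" "\<forall>a\<in>{k, k', k1, k2}. leq a m"
      using ub_fin[of "{k, k', k1, k2}"] k w(3) k1 k2 by auto
    have e1: "\<phi> i m x = \<phi> i' m x'" using agree_push[OF i i'(1) k1(1) m(1) k1(2,3) _ x i'(2) k1(4)] m by auto
    have e2: "\<phi> j m y = \<phi> j' m y'" using agree_push[OF j j'(1) k2(1) m(1) k2(2,3) _ y j'(2) k2(4)] m by auto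
    have "\<phi> k' m (\<phi> i' k' x' \<oplus>\<^bsub>L k'\<^esub> \<phi> j' k' y') = \<phi> k m (\<phi> i k x \<oplus>\<^bsub>L k\<^esub> \<phi> j k y)"
      using push_sum[OF i'(1) j'(1) w(3) m(1) w(4,5) _ i'(2) j'(2)]
        push_sum[OF i j k(1) m(1) k(2,3) _ x y] m e1 e2 by auto
    moreover have "leq k' m" "leq k m" using m by auto
    ultimately show "Z = dl_in I leq L \<phi> k (\<phi> i k x \<oplus>\<^bsub>L k\<^esub> \<phi> j k y)"
      unfolding w(6) using dl_in_eq_iff[OF w(3) sum_in[OF i'(1) j'(1) w(3,4,5) i'(2) j'(2)] k(1) sum_in[OF i j k x y]] m(1)
      by blast
  qed
qed

lemma dl_smult:
  assumes i: "i \<in> I" and x: "x \<in> carrier (L i)" and r: "r \<in> carrier R"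
  shows "r \<odot>\<^bsub>dirlim I leq L \<phi>\<^esub> dl_in I leq L \<phi> i x = dl_in I leq L \<phi> i (r \<odot>\<^bsub>L i\<^esub> x)"
proof -
  let ?X = "dl_in I leq L \<phi> i x"
  let ?P = "\<lambda>Z. \<exists>i x. (i, x) \<in> ?X \<and> Z = dl_in I leq L \<phi> i (r \<odot>\<^bsub>L i\<^esub> x)"
  have eq: "r \<odot>\<^bsub>dirlim I leq L \<phi>\<^esub> ?X = (SOME Z. ?P Z)" by (simp add: dirlim_def)
  have Xq: "?X \<in> Sg // RR" using dl_in_quot i x by auto
  have sc: "r \<odot>\<^bsub>L a\<^esub> u \<in> carrier (L a)" if "a \<in> I" "u \<in> carrier (L a)" for a u
  proof -
    interpret M: module R "L a" using ds_mod[OF ds that(1)] .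
    show ?thesis using r that(2) by simp
  qed
  show ?thesis unfolding eq
  proof (rule someI2[where P = ?P])
    show "?P (dl_in I leq L \<phi> i (r \<odot>\<^bsub>L i\<^esub> x))" using dl_in_self i x by blast
  next
    fix Z assume "?P Z"
    then obtain i' x' where w: "(i', x') \<in> ?X" "Z = dl_in I leq L \<phi> i' (r \<odot>\<^bsub>L i'\<^esub> x')" by blast
    have i': "i' \<in> I" "x' \<in> carrier (L i')" "?X = dl_in I leq L \<phi> i' x'" using quot_mem[OF Xq w(1)] by auto
    obtain k1 where k1: "k1 \<in> I" "leq i k1" "leq i' k1" "\<phi> i k1 x = \<phi> i' k1 x'"
      using dl_in_eq_iff[OF i x i'(1,2)] i'(3) by blast
    have "\<phi> i' k1 (r \<odot>\<^bsub>L i'\<^esub> x') = \<phi> i k1 (r \<odot>\<^bsub>L i\<^esub> x)"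
      using hom_smult[OF i k1(1) k1(2) r x] hom_smult[OF i'(1) k1(1) k1(3) r i'(2)] k1(4) by simp
    then have "\<exists>k\<in>I. leq i' k \<and> leq i k \<and> \<phi> i' k (r \<odot>\<^bsub>L i'\<^esub> x') = \<phi> i k (r \<odot>\<^bsub>L i\<^esub> x)"
      using k1 by blast
    then show "Z = dl_in I leq L \<phi> i (r \<odot>\<^bsub>L i\<^esub> x)"
      unfolding w(2) using dl_in_eq_iff[OF i'(1) sc[OF i'(1,2)] i sc[OF i x]] by simp
  qed
qed

lemma dl_zero:
  assumes i: "i \<in> I"
  shows "\<zero>\<^bsub>dirlim I leq L \<phi>\<^esub> = dl_in I leq L \<phi> i \<zero>\<^bsub>L i\<^esub>"
proof -
  define j where "j = (SOME i. i \<in> I)"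
  have j: "j \<in> I" unfolding j_def using i by (metis someI_ex)
  have eq: "\<zero>\<^bsub>dirlim I leq L \<phi>\<^esub> = dl_in I leq L \<phi> j \<zero>\<^bsub>L j\<^esub>" by (simp add: dirlim_def j_def Let_def)
  obtain k where k: "k \<in> I" "leq i k" "leq j k" using dir[OF i j] by blast
  have z: "\<zero>\<^bsub>L a\<^esub> \<in> carrier (L a)" if "a \<in> I" for a
  proof -
    interpret M: module R "L a" using ds_mod[OF ds that] .
    show ?thesis by simp
  qed
  have "\<phi> i k \<zero>\<^bsub>L i\<^esub> = \<phi> j k \<zero>\<^bsub>L j\<^esub>"
    using hom_zero[OF ds_mod[OF ds i] ds_mod[OF ds k(1)] ds_hom[OF ds i k(1,2)]]
      hom_zero[OF ds_mod[OF ds j] ds_mod[OF ds k(1)] ds_hom[OF ds j k(1,3)]] by simp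
  then show ?thesis unfolding eq using dl_in_eq_iff[OF j z[OF j] i z[OF i]] k by metis
qed

end

end



lemma U_psys:
  assumes pp: "prime p" and ds: "dir_system (Zp_ring p) I leq L \<phi>"
  shows "psys I leq (\<lambda>i. U p q (L i)) (\<lambda>i j. Umap p q (\<phi> i j))"
proof -
  interpret P: psys I leq L \<phi> using ds_psys[OF ds] .
  show ?thesis
  proof
    show "I \<noteq> {}" using P.ne .
    show "\<And>i. i \<in> I \<Longrightarrow> leq i i" using P.rfl .
    show "\<And>i j k. i \<in> I \<Longrightarrow> j \<in> I \<Longrightarrow> k \<in> I \<Longrightarrow> leq i j \<Longrightarrow> leq j k \<Longrightarrow> leq i k" using P.trn .
    show "\<And>i j. i \<in> I \<Longrightarrow> j \<in> I \<Longrightarrow> \<exists>k\<in>I. leq i k \<and> leq j k" using P.dir .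
  next
    fix i f assume i: "i \<in> I" and f: "f \<in> carrier (U p q (L i))"
    show "Umap p q (\<phi> i i) f = f"
    proof (rule extensionalityI)
      show "Umap p q (\<phi> i i) f \<in> extensional (carrier (A_ring p q))" by (simp add: Umap_def)
      show "f \<in> extensional (carrier (A_ring p q))" using U_D(1)[OF f] .
      fix t assume t: "t \<in> carrier (A_ring p q)"
      show "Umap p q (\<phi> i i) f t = f t" using t P.ident[OF i U_val[OF f t]] by (simp add: Umap_def)
    qed
  next
    fix i j k f assume ijk: "i \<in> I" "j \<in> I" "k \<in> I" "leq i j" "leq j k" and f: "f \<in> carrier (U p q (L i))"
    show "Umap p q (\<phi> j k) (Umap p q (\<phi> i j) f) = Umap p q (\<phi> i k) f"
    proof (rule extensionalityI)
      show "Umap p q (\<phi> j k) (Umap p q (\<phi> i j) f) \<in> extensional (carrier (A_ring p q))" by (simp add: Umap_def)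
      show "Umap p q (\<phi> i k) f \<in> extensional (carrier (A_ring p q))" by (simp add: Umap_def)
      fix t assume t: "t \<in> carrier (A_ring p q)"
      show "Umap p q (\<phi> j k) (Umap p q (\<phi> i j) f) t = Umap p q (\<phi> i k) f t"
        using t P.comp[OF ijk U_val[OF f t]] by (simp add: Umap_def)
    qed
  next
    fix i j f assume ij: "i \<in> I" "j \<in> I" "leq i j" and f: "f \<in> carrier (U p q (L i))"
    obtain n where "Avan p q (L i) f n" using U_D(4)[OF f] by blast
    then show "Umap p q (\<phi> i j) f \<in> carrier (U p q (L j))"
      using Umap_in[OF pp ds_mod[OF ds ij(1)] ds_mod[OF ds ij(2)] ds_hom[OF ds ij] f] by blast
  qed
qed

lemma dirlim_carrier: "carrier (dirlim I leq L \<phi>) = (SIGMA i:I. carrier (L i)) // dl_rel I leq L \<phi>"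
  by (simp add: dirlim_def)

context
  fixes p :: nat and q :: int and I :: "'i set" and leq and L :: "'i \<Rightarrow> (rat, 'a) module" and \<phi>
  assumes pp: "prime p" and ds: "dir_system (Zp_ring p) I leq L \<phi>"
begin

interpretation P: psys I leq L \<phi> using ds_psys[OF ds] .
interpretation PU: psys I leq "\<lambda>i. U p q (L i)" "\<lambda>i j. Umap p q (\<phi> i j)" using U_psys[OF pp ds] .

lemma dl_can_eq:
  assumes i: "i \<in> I" and f: "f \<in> carrier (U p q (L i))"
  shows "dl_can p q I leq L \<phi> (dl_in I leq (\<lambda>i. U p q (L i)) (\<lambda>i j. Umap p q (\<phi> i j)) i f)
      = (\<lambda>t\<in>carrier (A_ring p q). dl_in I leq L \<phi> i (f t))"
proof -
  let ?X = "dl_in I leq (\<lambda>i. U p q (L i)) (\<lambda>i j. Umap p q (\<phi> i j)) i f"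
  have Xq: "?X \<in> PU.Sg // PU.RR" using PU.dl_in_quot[OF i f] .
  have "\<exists>ix. ix \<in> ?X" using PU.dl_in_self[OF i f] by blast
  then have sm: "(SOME ix. ix \<in> ?X) \<in> ?X" by (rule someI_ex)
  obtain j g where jg: "(SOME ix. ix \<in> ?X) = (j, g)" by (cases "SOME ix. ix \<in> ?X")
  have jg2: "j \<in> I" "g \<in> carrier (U p q (L j))" "?X = dl_in I leq (\<lambda>i. U p q (L i)) (\<lambda>i j. Umap p q (\<phi> i j)) j g"
    using PU.quot_mem[OF Xq sm[unfolded jg]] by auto
  obtain k where k: "k \<in> I" "leq i k" "leq j k" "Umap p q (\<phi> i k) f = Umap p q (\<phi> j k) g"
    using PU.dl_in_eq_iff[OF i f jg2(1,2)] jg2(3) by blast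
  have "dl_can p q I leq L \<phi> ?X = (\<lambda>t\<in>carrier (A_ring p q). dl_in I leq L \<phi> j (g t))"
    unfolding dl_can_def jg by simp
  also have "\<dots> = (\<lambda>t\<in>carrier (A_ring p q). dl_in I leq L \<phi> i (f t))"
  proof (rule restrict_ext)
    fix t assume t: "t \<in> carrier (A_ring p q)"
    have "\<phi> i k (f t) = \<phi> j k (g t)" using fun_cong[OF k(4), of t] t by (simp add: Umap_def)
    then show "dl_in I leq L \<phi> j (g t) = dl_in I leq L \<phi> i (f t)"
      using P.dl_in_eq_iff[OF i U_val[OF f t] jg2(1) U_val[OF jg2(2) t]] k by metis
  qed
  finally show ?thesis .
qed

lemma G_in:
  assumes i: "i \<in> I" and f: "f \<in> carrier (U p q (L i))" and av: "Avan p q (L i) f n"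
  shows "(\<lambda>t\<in>carrier (A_ring p q). dl_in I leq L \<phi> i (f t)) \<in> carrier (U p q (dirlim I leq L \<phi>))
    \<and> Avan p q (dirlim I leq L \<phi>) (\<lambda>t\<in>carrier (A_ring p q). dl_in I leq L \<phi> i (f t)) n"
proof -
  let ?G = "\<lambda>t\<in>carrier (A_ring p q). dl_in I leq L \<phi> i (f t)"
  interpret M: module "Zp_ring p" "L i" using ds_mod[OF ds i] .
  have fl: "Alin p q (L i) f" using U_D(3)[OF f] .
  have "?G \<in> carrier (A_ring p q) \<rightarrow> carrier (dirlim I leq L \<phi>)"
    unfolding dirlim_carrier using P.dl_in_quot[OF i U_val[OF f]] by simp
  moreover have "Alin p q (dirlim I leq L \<phi>) ?G" unfolding Alin_def
  proof (intro conjI ballI)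
    fix a b assume ab: "a \<in> carrier (A_ring p q)" "b \<in> carrier (A_ring p q)"
    have fa: "f a \<in> carrier (L i)" "f b \<in> carrier (L i)" using U_val[OF f] ab by auto
    have "?G a \<oplus>\<^bsub>dirlim I leq L \<phi>\<^esub> ?G b = dl_in I leq L \<phi> i (\<phi> i i (f a) \<oplus>\<^bsub>L i\<^esub> \<phi> i i (f b))"
      using P.dl_add[OF ds i i i P.rfl[OF i] P.rfl[OF i] fa] ab by simp
    also have "\<dots> = dl_in I leq L \<phi> i (f (a \<oplus>\<^bsub>A_ring p q\<^esub> b))"
      using P.ident[OF i] fa fl ab unfolding Alin_def by simp
    finally show "?G (a \<oplus>\<^bsub>A_ring p q\<^esub> b) = ?G a \<oplus>\<^bsub>dirlim I leq L \<phi>\<^esub> ?G b"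
      using A_add_closed[OF pp ab] by simp
  next
    fix r a assume ra: "r \<in> Zp_set p" "a \<in> carrier (A_ring p q)"
    have fa: "f a \<in> carrier (L i)" using U_val[OF f] ra by auto
    have r: "r \<in> carrier (Zp_ring p)" using ra by (simp add: Zp_ring_simps)
    have "r \<odot>\<^bsub>dirlim I leq L \<phi>\<^esub> ?G a = dl_in I leq L \<phi> i (r \<odot>\<^bsub>L i\<^esub> f a)"
      using P.dl_smult[OF ds i fa r] ra by simp
    also have "\<dots> = dl_in I leq L \<phi> i (f (A_scal r a))" using fl ra unfolding Alin_def by simp
    finally show "?G (A_scal r a) = r \<odot>\<^bsub>dirlim I leq L \<phi>\<^esub> ?G a"
      using A_scal_closed[OF pp ra] by simp
  qed
  moreover have "Avan p q (dirlim I leq L \<phi>) ?G n" unfolding Avan_def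
  proof
    fix a assume a: "a \<in> A_filt p q n"
    then have "a \<in> carrier (A_ring p q)" "f a = \<zero>\<^bsub>L i\<^esub>" using av by (auto simp: A_filt_def Avan_def)
    then show "?G a = \<zero>\<^bsub>dirlim I leq L \<phi>\<^esub>" using P.dl_zero[OF ds i] by simp
  qed
  moreover have "?G \<in> extensional (carrier (A_ring p q))" by simp
  ultimately show ?thesis unfolding U_carrier_iff by blast
qed

lemma part3_inj:
  "inj_on (dl_can p q I leq L \<phi>) (carrier (dirlim I leq (\<lambda>i. U p q (L i)) (\<lambda>i j. Umap p q (\<phi> i j))))"
proof (rule inj_onI)
  fix X Y
  assume X: "X \<in> carrier (dirlim I leq (\<lambda>i. U p q (L i)) (\<lambda>i j. Umap p q (\<phi> i j)))"
    and Y: "Y \<in> carrier (dirlim I leq (\<lambda>i. U p q (L i)) (\<lambda>i j. Umap p q (\<phi> i j)))"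
    and eq: "dl_can p q I leq L \<phi> X = dl_can p q I leq L \<phi> Y"
  obtain i f where f: "i \<in> I" "f \<in> carrier (U p q (L i))"
      "X = dl_in I leq (\<lambda>i. U p q (L i)) (\<lambda>i j. Umap p q (\<phi> i j)) i f"
    using PU.quot_rep X unfolding dirlim_carrier by blast
  obtain j g where g: "j \<in> I" "g \<in> carrier (U p q (L j))"
      "Y = dl_in I leq (\<lambda>i. U p q (L i)) (\<lambda>i j. Umap p q (\<phi> i j)) j g"
    using PU.quot_rep Y unfolding dirlim_carrier by blast
  have eqt: "dl_in I leq L \<phi> i (f t) = dl_in I leq L \<phi> j (g t)" if t: "t \<in> carrier (A_ring p q)" for t
    using fun_cong[OF eq, of t] t unfolding f(3) g(3) dl_can_eq[OF f(1,2)] dl_can_eq[OF g(1,2)] by simp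
  obtain n1 n2 where n12: "Avan p q (L i) f n1" "Avan p q (L j) g n2" using U_D(4)[OF f(2)] U_D(4)[OF g(2)] by blast
  define n where "n = max n1 n2"
  have avn: "Avan p q (L i) f n" "Avan p q (L j) g n" using n12 Avan_mono n_def by fastforce+
  have "\<forall>m. \<exists>k. k \<in> I \<and> leq i k \<and> leq j k \<and> \<phi> i k (f (evec m)) = \<phi> j k (g (evec m))"
  proof
    fix m
    show "\<exists>k. k \<in> I \<and> leq i k \<and> leq j k \<and> \<phi> i k (f (evec m)) = \<phi> j k (g (evec m))"
      using eqt[OF evec_carrier[OF pp]] P.dl_in_eq_iff[OF f(1) U_val[OF f(2) evec_carrier[OF pp]] g(1) U_val[OF g(2) evec_carrier[OF pp]]]
      by blast
  qed
  from choice[OF this] obtain kk where kk: "\<And>m. kk m \<in> I \<and> leq i (kk m) \<and> leq j (kk m) \<and> \<phi> i (kk m) (f (evec m)) = \<phi> j (kk m) (g (evec m))"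
    by blast
  obtain K where K: "K \<in> I" "\<forall>a\<in>insert i (insert j (kk ` {..<n})). leq a K"
    using P.ub_fin[of "insert i (insert j (kk ` {..<n}))"] f(1) g(1) kk by blast
  have KK: "leq i K" "leq j K" using K by auto
  have agree: "\<phi> i K (f (evec m)) = \<phi> j K (g (evec m))" if m: "m < n" for m
    using P.agree_push[OF f(1) g(1) _ K(1) _ _ _ U_val[OF f(2) evec_carrier[OF pp]] U_val[OF g(2) evec_carrier[OF pp]]] kk[of m] K m
    by blast
  have u1: "Umap p q (\<phi> i K) f \<in> carrier (U p q (L K))" "Avan p q (L K) (Umap p q (\<phi> i K) f) n"
    using Umap_in[OF pp ds_mod[OF ds f(1)] ds_mod[OF ds K(1)] ds_hom[OF ds f(1) K(1) KK(1)] f(2) avn(1)] by auto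
  have u2: "Umap p q (\<phi> j K) g \<in> carrier (U p q (L K))" "Avan p q (L K) (Umap p q (\<phi> j K) g) n"
    using Umap_in[OF pp ds_mod[OF ds g(1)] ds_mod[OF ds K(1)] ds_hom[OF ds g(1) K(1) KK(2)] g(2) avn(2)] by auto
  have "Umap p q (\<phi> i K) f = Umap p q (\<phi> j K) g"
    using U_ext_eq[OF pp u1(1) u2(1) u1(2) u2(2)] agree evec_carrier[OF pp] by (simp add: Umap_def)
  then show "X = Y" unfolding f(3) g(3) using PU.dl_in_eq_iff[OF f(1,2) g(1,2)] K(1) KK by blast
qed

lemma part3_surj:
  assumes F: "F \<in> carrier (U p q (dirlim I leq L \<phi>))"
  shows "F \<in> dl_can p q I leq L \<phi> ` carrier (dirlim I leq (\<lambda>i. U p q (L i)) (\<lambda>i j. Umap p q (\<phi> i j)))"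
proof -
  obtain n where Fn: "Avan p q (dirlim I leq L \<phi>) F n" using U_D(4)[OF F] by blast
  have "\<forall>m. \<exists>ix. fst ix \<in> I \<and> snd ix \<in> carrier (L (fst ix)) \<and> F (evec m) = dl_in I leq L \<phi> (fst ix) (snd ix)"
  proof
    fix m
    have "F (evec m) \<in> P.Sg // P.RR" using U_val[OF F evec_carrier[OF pp]] unfolding dirlim_carrier .
    then show "\<exists>ix. fst ix \<in> I \<and> snd ix \<in> carrier (L (fst ix)) \<and> F (evec m) = dl_in I leq L \<phi> (fst ix) (snd ix)"
      using P.quot_rep by fastforce
  qed
  from choice[OF this] obtain ix where ix: "\<And>m. fst (ix m) \<in> I \<and> snd (ix m) \<in> carrier (L (fst (ix m)))
      \<and> F (evec m) = dl_in I leq L \<phi> (fst (ix m)) (snd (ix m))" by blast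
  obtain K where K: "K \<in> I" "\<forall>a\<in>(\<lambda>m. fst (ix m)) ` {..<n}. leq a K"
    using P.ub_fin[of "(\<lambda>m. fst (ix m)) ` {..<n}"] ix by blast
  define y where "y m = \<phi> (fst (ix m)) K (snd (ix m))" for m
  have yc: "\<forall>m<n. y m \<in> carrier (L K)" using P.into ix K unfolding y_def by blast
  have Fy: "F (evec m) = dl_in I leq L \<phi> K (y m)" if "m < n" for m
    using P.dl_in_push[of "fst (ix m)" K "snd (ix m)"] ix[of m] K that unfolding y_def by auto
  obtain \<psi> where psi: "\<psi> \<in> carrier (U p q (L K))" "Avan p q (L K) \<psi> n" "\<forall>m<n. \<psi> (evec m) = y m"
    using U_exists'[OF pp ds_mod[OF ds K(1)] yc, of q] by blast
  define X where "X = dl_in I leq (\<lambda>i. U p q (L i)) (\<lambda>i j. Umap p q (\<phi> i j)) K \<psi>"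
  have Xc: "X \<in> carrier (dirlim I leq (\<lambda>i. U p q (L i)) (\<lambda>i j. Umap p q (\<phi> i j)))"
    unfolding X_def dirlim_carrier using PU.dl_in_quot[OF K(1) psi(1)] .
  have G: "(\<lambda>t\<in>carrier (A_ring p q). dl_in I leq L \<phi> K (\<psi> t)) \<in> carrier (U p q (dirlim I leq L \<phi>))"
     "Avan p q (dirlim I leq L \<phi>) (\<lambda>t\<in>carrier (A_ring p q). dl_in I leq L \<phi> K (\<psi> t)) n"
    using G_in[OF K(1) psi(1,2)] by auto
  have "(\<lambda>t\<in>carrier (A_ring p q). dl_in I leq L \<phi> K (\<psi> t)) = F"
    using U_ext_eq[OF pp G(1) F G(2) Fn] psi(3) Fy evec_carrier[OF pp] by simp
  then have "dl_can p q I leq L \<phi> X = F" unfolding X_def dl_can_eq[OF K(1) psi(1)] .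
  then show ?thesis using Xc by blast
qed

end

lemma part3:
  assumes pp: "prime p"
  shows "(\<forall>(I :: 'j set) leq (L :: 'j \<Rightarrow> (rat, 'e) module) \<phi>.
        dir_system (Zp_ring p) I leq L \<phi> \<longrightarrow>
        bij_betw (dl_can p q I leq L \<phi>)
          (carrier (dirlim I leq (\<lambda>i. U p q (L i)) (\<lambda>i j. Umap p q (\<phi> i j))))
          (carrier (U p q (dirlim I leq L \<phi>))))"
proof (intro allI impI)
  fix I :: "'j set" and leq and L :: "'j \<Rightarrow> (rat, 'e) module" and \<phi>
  assume ds: "dir_system (Zp_ring p) I leq L \<phi>"
  have "dl_can p q I leq L \<phi> ` carrier (dirlim I leq (\<lambda>i. U p q (L i)) (\<lambda>i j. Umap p q (\<phi> i j)))
      = carrier (U p q (dirlim I leq L \<phi>))"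
  proof
    show "dl_can p q I leq L \<phi> ` carrier (dirlim I leq (\<lambda>i. U p q (L i)) (\<lambda>i j. Umap p q (\<phi> i j)))
      \<subseteq> carrier (U p q (dirlim I leq L \<phi>))"
    proof
      fix G assume "G \<in> dl_can p q I leq L \<phi> ` carrier (dirlim I leq (\<lambda>i. U p q (L i)) (\<lambda>i j. Umap p q (\<phi> i j)))"
      then obtain X where X: "X \<in> carrier (dirlim I leq (\<lambda>i. U p q (L i)) (\<lambda>i j. Umap p q (\<phi> i j)))"
        "G = dl_can p q I leq L \<phi> X" by blast
      interpret PU: psys I leq "\<lambda>i. U p q (L i)" "\<lambda>i j. Umap p q (\<phi> i j)" using U_psys[OF pp ds] .
      obtain i f where f: "i \<in> I" "f \<in> carrier (U p q (L i))"
          "X = dl_in I leq (\<lambda>i. U p q (L i)) (\<lambda>i j. Umap p q (\<phi> i j)) i f"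
        using PU.quot_rep X(1) unfolding dirlim_carrier by blast
      obtain n where "Avan p q (L i) f n" using U_D(4)[OF f(2)] by blast
      then show "G \<in> carrier (U p q (dirlim I leq L \<phi>))"
        using G_in[OF pp ds f(1,2)] dl_can_eq[OF pp ds f(1,2)] X(2) f(3) by metis
    qed
    show "carrier (U p q (dirlim I leq L \<phi>))
      \<subseteq> dl_can p q I leq L \<phi> ` carrier (dirlim I leq (\<lambda>i. U p q (L i)) (\<lambda>i j. Umap p q (\<phi> i j)))"
      using part3_surj[OF pp ds] by blast
  qed
  then show "bij_betw (dl_can p q I leq L \<phi>)
          (carrier (dirlim I leq (\<lambda>i. U p q (L i)) (\<lambda>i j. Umap p q (\<phi> i j))))
          (carrier (U p q (dirlim I leq L \<phi>)))"
    unfolding bij_betw_def using part3_inj[OF pp ds] by blast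
qed


theorem theorem5p5:
  fixes p :: nat and q :: int
  assumes "prime p" and "odd p"
    and "residue_primroot (p ^ 2) (nat (q mod int (p ^ 2)))"
  shows
    \<comment> \<open>exactness\<close>
    "(\<forall>(L1 :: (rat, 'a) module) (L2 :: (rat, 'b) module) (L3 :: (rat, 'c) module) f g.
        module (Zp_ring p) L1 \<and> module (Zp_ring p) L2 \<and> module (Zp_ring p) L3
        \<and> f \<in> mod_hom (Zp_ring p) L1 L2 \<and> g \<in> mod_hom (Zp_ring p) L2 L3
        \<and> f ` carrier L1 = {y \<in> carrier L2. g y = \<zero>\<^bsub>L3\<^esub>}
        \<longrightarrow> Umap p q f ` carrier (U p q L1)
              = {\<psi> \<in> carrier (U p q L2). Umap p q g \<psi> = \<zero>\<^bsub>U p q L3\<^esub>})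
    \<comment> \<open>direct sums: the canonical map from the sum of the U L_i to U of the sum is bijective\<close>
   \<and> (\<forall>(I :: 'i set) (L :: 'i \<Rightarrow> (rat, 'd) module).
        (\<forall>i\<in>I. module (Zp_ring p) (L i)) \<longrightarrow>
        bij_betw (\<lambda>\<Phi>. \<lambda>t\<in>carrier (A_ring p q). \<lambda>i\<in>I. \<Phi> i t)
          (carrier (dsum I (\<lambda>i. U p q (L i)))) (carrier (U p q (dsum I L))))
    \<comment> \<open>direct limits: the canonical map colim U L_i to U (colim L_i) is bijective\<close>
   \<and> (\<forall>(I :: 'j set) leq (L :: 'j \<Rightarrow> (rat, 'e) module) \<phi>.
        dir_system (Zp_ring p) I leq L \<phi> \<longrightarrow>
        bij_betw (dl_can p q I leq L \<phi>)
          (carrier (dirlim I leq (\<lambda>i. U p q (L i)) (\<lambda>i j. Umap p q (\<phi> i j))))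
          (carrier (U p q (dirlim I leq L \<phi>))))"
    using part1[OF assms(1), of q] part2[OF assms(1), of q] part3[OF assms(1), of q] by blast

end
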